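(* Let $\rho=|\psi\rangle\langle\psi|$ be an $n$-qubit pure state, $S\subseteq[n]$ non-empty with $s=|S|$, $\epsilon>0$ and $1-\delta\in(0,1)$. Let $N_B=\lceil 8\log(1/\delta)\rceil$ and $$K_{\mathrm{opt}}=\left\lceil\frac12\Big(\frac{16}{\epsilon^2}\Big(\frac32\Big)^s+1\Big)+\frac12\sqrt{\Big(\frac{16}{\epsilon^2}\Big(\frac32\Big)^s-1\Big)^2+\frac{32}{\epsilon^2}3^s}\,\right\rceil.$$ Perform $M=N_BK_{\mathrm{opt}}$ independent local SIC-POVM measurements on the qubits of $S$ of copies of $\rho$, with i.i.d. outcomes $\mathbf{Q}_1,\dots,\mathbf{Q}_M\in\{1,2,3,4\}^s$ distributed as $P(\mathbf{q})=\operatorname{tr}\big(\rho\bigotimes_{i\in S}|\tilde\phi_{q_i}\rangle\langle\tilde\phi_{q_i}|\big)$. For $1\le b\le N_B$ let $$\hat S_b=\frac{1}{K_{\mathrm{opt}}(K_{\mathrm{opt}}-1)}\sum_{\substack{k,k'=(b-1)K_{\mathrm{opt}}+1\\k\ne k'}}^{bK_{\mathrm{opt}}}\mathbb{1}[\mathbf{Q}_k=\mathbf{Q}_{k'}],\qquad \overline{\mathcal{C}}^{(b)}_{|\psi\rangle}(S)=1-3^s\hat S_b.$$ Then $$\Pr\Big[\big|\operatorname{median}\big(\overline{\mathcal{C}}^{(1)}_{|\psi\rangle}(S),\dots,\overline{\mathcal{C}}^{(N_B)}_{|\psi\rangle}(S)\big)-\mathcal{C}_{|\psi\rangle}(S)\big|\ge\epsilon\Big]\le\delta,$$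 giving an upper bound $O\big(\big[(3/2)^s\epsilon^{-2}+\sqrt{3^s}\,\epsilon^{-1}\big]\log(1/\delta)\big)$ on the number of SIC measurements needed to estimate $\mathcal{C}_{|\psi\rangle}(S)$.
   Context: $[n]=\{1,\dots,n\}$ labels the qubits. For an $n$-qubit pure state $|\psi\rangle$ and a non-empty $S\subseteq[n]$ with $s=|S|$, the concentratable entanglement is $\mathcal{C}_{|\psi\rangle}(S)=1-\frac{1}{2^s}\sum_{\alpha\subseteq S}\operatorname{tr}(\rho_\alpha^2)$, where $\rho_\alpha$ is the reduced state of $|\psi\rangle\langle\psi|$ on the qubits in $\alpha$, and $\operatorname{tr}(\rho_\emptyset^2):=1$. A single-qubit SIC-POVM consists of $|\tilde\phi_j\rangle=\frac{1}{\sqrt2}|\phi_j\rangle$, $j=1,\dots,4$, where $|\phi_j\rangle$ are unit vectors in $\mathbb{C}^2$ with $|\langle\phi_j|\phi_k\rangle|^2=1/3$ for $j\neq k$, so that $\sum_j|\tilde\phi_j\rangle\langle\tilde\phi_j|=\mathbb{I}$. $\mathbb{1}[A]$ is $1$ if $A$ holds and $0$ otherwise. *)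

theory Defs
  imports Complex_Main "HOL-Library.FuncSet"
begin

(* Qubits are labelled 1..n.  A computational-basis label of the qubits in a set A is an
   element of  A \<rightarrow>\<^sub>E {0,1}  (bit value of each qubit in A, extensional). *)
definition bits :: "nat set \<Rightarrow> (nat \<Rightarrow> nat) set" where
  "bits A = A \<rightarrow>\<^sub>E {0, 1}"

(* An n-qubit pure state |psi> = sum_x psi x |x>, x ranging over bits {1..n}; unit norm. *)
definition pure_state :: "nat \<Rightarrow> ((nat \<Rightarrow> nat) \<Rightarrow> complex) \<Rightarrow> bool" where
  "pure_state n \<psi> \<longleftrightarrow> (\<Sum>x\<in>bits {1..n}. (cmod (\<psi> x))\<^sup>2) = 1"

definition merge :: "nat set \<Rightarrow> (nat \<Rightarrow> nat) \<Rightarrow> (nat \<Rightarrow> nat) \<Rightarrow> (nat \<Rightarrow> nat)" where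
  "merge \<alpha> a c = (\<lambda>i. if i \<in> \<alpha> then a i else c i)"

(* matrix entry <a|rho_alpha|a'> of the reduced state on \<alpha> of |psi><psi| (partial trace
   over the qubits in {1..n} - \<alpha>) *)
definition reduced :: "nat \<Rightarrow> ((nat \<Rightarrow> nat) \<Rightarrow> complex) \<Rightarrow> nat set
    \<Rightarrow> (nat \<Rightarrow> nat) \<Rightarrow> (nat \<Rightarrow> nat) \<Rightarrow> complex" where
  "reduced n \<psi> \<alpha> a a' =
     (\<Sum>c\<in>bits ({1..n} - \<alpha>). \<psi> (merge \<alpha> a c) * cnj (\<psi> (merge \<alpha> a' c)))"

(* tr(rho_alpha^2), with tr(rho_{} ^2) := 1 *)
definition purity :: "nat \<Rightarrow> ((nat \<Rightarrow> nat) \<Rightarrow> complex) \<Rightarrow> nat set \<Rightarrow> real" where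
  "purity n \<psi> \<alpha> = (if \<alpha> = {} then 1 else
     Re (\<Sum>a\<in>bits \<alpha>. \<Sum>a'\<in>bits \<alpha>. reduced n \<psi> \<alpha> a a' * reduced n \<psi> \<alpha> a' a))"

definition conc_ent :: "nat \<Rightarrow> ((nat \<Rightarrow> nat) \<Rightarrow> complex) \<Rightarrow> nat set \<Rightarrow> real" where
  "conc_ent n \<psi> S = 1 - (1 / 2 ^ card S) * (\<Sum>\<alpha>\<in>Pow S. purity n \<psi> \<alpha>)"

(* single-qubit SIC: \<phi> j b = b-th component (b \<in> {0,1}) of the unit vector |phi_j>, j \<in> {1..4} *)
definition sic :: "(nat \<Rightarrow> nat \<Rightarrow> complex) \<Rightarrow> bool" where
  "sic \<phi> \<longleftrightarrow>
     (\<forall>j\<in>{1..4}. (\<Sum>b\<in>{0,1}. (cmod (\<phi> j b))\<^sup>2) = 1) \<and>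
     (\<forall>j\<in>{1..4}. \<forall>k\<in>{1..4}. j \<noteq> k \<longrightarrow>
        (cmod (\<Sum>b\<in>{0,1}. cnj (\<phi> j b) * \<phi> k b))\<^sup>2 = 1 / 3)"

(* entry <b|phi~_j><phi~_j|b'> of the POVM element, phi~_j = phi_j / sqrt 2 *)
definition povm_elem :: "(nat \<Rightarrow> nat \<Rightarrow> complex) \<Rightarrow> nat \<Rightarrow> nat \<Rightarrow> nat \<Rightarrow> complex" where
  "povm_elem \<phi> j b b' =
     (\<phi> j b / complex_of_real (sqrt 2)) * cnj (\<phi> j b' / complex_of_real (sqrt 2))"

(* P(q) = tr( rho (\<Otimes>_{i\<in>S} |phi~_{q_i}><phi~_{q_i}| \<otimes> Id_{[n]-S}) ), q \<in> S \<rightarrow>\<^sub>E {1..4} *)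
definition sic_prob :: "nat \<Rightarrow> ((nat \<Rightarrow> nat) \<Rightarrow> complex) \<Rightarrow> (nat \<Rightarrow> nat \<Rightarrow> complex)
    \<Rightarrow> nat set \<Rightarrow> (nat \<Rightarrow> nat) \<Rightarrow> real" where
  "sic_prob n \<psi> \<phi> S q = Re (\<Sum>x\<in>bits {1..n}. \<Sum>y\<in>bits {1..n}.
      (\<psi> x * cnj (\<psi> y)) *
      ((\<Prod>i\<in>S. povm_elem \<phi> (q i) (y i) (x i)) *
       (if \<forall>i\<in>{1..n} - S. y i = x i then 1 else 0)))"

definition median :: "real list \<Rightarrow> real" where
  "median xs = (let ys = sort xs; m = length xs in
     if odd m then ys ! (m div 2) else (ys ! (m div 2 - 1) + ys ! (m div 2)) / 2)"

definition N_B :: "real \<Rightarrow> nat" where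
  "N_B \<delta> = nat \<lceil>8 * ln (1 / \<delta>)\<rceil>"

definition K_opt :: "real \<Rightarrow> nat \<Rightarrow> nat" where
  "K_opt \<epsilon> s = nat \<lceil>(1/2) * ((16 / \<epsilon>\<^sup>2) * (3/2) ^ s + 1)
      + (1/2) * sqrt (((16 / \<epsilon>\<^sup>2) * (3/2) ^ s - 1)\<^sup>2 + (32 / \<epsilon>\<^sup>2) * 3 ^ s)\<rceil>"

definition S_hat :: "nat \<Rightarrow> (nat \<Rightarrow> (nat \<Rightarrow> nat)) \<Rightarrow> nat \<Rightarrow> real" where
  "S_hat K Q b = (1 / (real K * (real K - 1))) *
     (\<Sum>k\<in>{(b - 1) * K + 1 .. b * K}. \<Sum>k'\<in>{(b - 1) * K + 1 .. b * K}.
        if k \<noteq> k' \<and> Q k = Q k' then 1 else 0)"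

definition CE_est :: "nat \<Rightarrow> nat \<Rightarrow> (nat \<Rightarrow> (nat \<Rightarrow> nat)) \<Rightarrow> nat \<Rightarrow> real" where
  "CE_est s K Q b = 1 - 3 ^ s * S_hat K Q b"

end

theory Submission
  imports Defs "HOL-Analysis.Convex"
begin


lemma fac4:
  fixes f1 f2 f3 f4 :: "nat \<Rightarrow> complex"
  shows "(\<Sum>b1\<in>B. \<Sum>b2\<in>B. \<Sum>b3\<in>B. \<Sum>b4\<in>B. f1 b1 * f2 b2 * f3 b3 * f4 b4)
   = (\<Sum>b\<in>B. f1 b) * (\<Sum>b\<in>B. f2 b) * (\<Sum>b\<in>B. f3 b) * (\<Sum>b\<in>B. f4 b)"
  by (simp only: sum_distrib_left[symmetric] sum_distrib_right[symmetric])

lemma sw3: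
  fixes h :: "nat \<Rightarrow> nat \<Rightarrow> nat \<Rightarrow> complex"
  shows "(\<Sum>b\<in>B. \<Sum>j\<in>J. \<Sum>k\<in>J. h b j k) = (\<Sum>j\<in>J. \<Sum>k\<in>J. \<Sum>b\<in>B. h b j k)"
proof -
  have "(\<Sum>b\<in>B. \<Sum>j\<in>J. \<Sum>k\<in>J. h b j k) = (\<Sum>j\<in>J. \<Sum>b\<in>B. \<Sum>k\<in>J. h b j k)" by (rule sum.swap)
  also have "\<dots> = (\<Sum>j\<in>J. \<Sum>k\<in>J. \<Sum>b\<in>B. h b j k)" by (rule sum.cong[OF refl], rule sum.swap)
  finally show ?thesis .
qed

lemma sum4_zero:
  fixes f :: "nat \<Rightarrow> nat \<Rightarrow> nat \<Rightarrow> nat \<Rightarrow> real"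
  assumes "finite B" "\<And>b1 b2 b3 b4. 0 \<le> f b1 b2 b3 b4"
    and "(\<Sum>b1\<in>B. \<Sum>b2\<in>B. \<Sum>b3\<in>B. \<Sum>b4\<in>B. f b1 b2 b3 b4) = 0"
  shows "\<forall>b1\<in>B. \<forall>b2\<in>B. \<forall>b3\<in>B. \<forall>b4\<in>B. f b1 b2 b3 b4 = 0"
  using assms by (simp add: sum_nonneg sum_nonneg_eq_0_iff)

lemma J4: "{1..4::nat} = {1,2,3,4}" by auto

lemma sic_facts:
  assumes "sic \<phi>"
  shows "\<And>j. j \<in> {1..4} \<Longrightarrow> (\<Sum>b\<in>{0,1}. cnj (\<phi> j b) * \<phi> j b) = 1"
    and "\<And>j k. j \<in> {1..4} \<Longrightarrow> k \<in> {1..4} \<Longrightarrow> j \<noteq> k \<Longrightarrow>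
          (\<Sum>b\<in>{0,1}. cnj (\<phi> j b) * \<phi> k b) * cnj (\<Sum>b\<in>{0,1}. cnj (\<phi> j b) * \<phi> k b) = 1/3"
proof -
  fix j assume j: "j \<in> {1..4::nat}"
  have "(\<Sum>b\<in>{0::nat,1}. (cmod (\<phi> j b))\<^sup>2) = 1" using assms j unfolding sic_def by blast
  hence "complex_of_real (\<Sum>b\<in>{0::nat,1}. (cmod (\<phi> j b))\<^sup>2) = 1" by simp
  thus "(\<Sum>b\<in>{0,1}. cnj (\<phi> j b) * \<phi> j b) = 1"
    unfolding of_real_sum complex_norm_square by (simp add: mult.commute)
next
  fix j k assume jk: "j \<in> {1..4::nat}" "k \<in> {1..4::nat}" "j \<noteq> k"
  have "(cmod (\<Sum>b\<in>{0::nat,1}. cnj (\<phi> j b) * \<phi> k b))\<^sup>2 = 1/3" using assms jk unfolding sic_def by blast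
  from arg_cong[OF this, of complex_of_real]
  show "(\<Sum>b\<in>{0,1}. cnj (\<phi> j b) * \<phi> k b) * cnj (\<Sum>b\<in>{0,1}. cnj (\<phi> j b) * \<phi> k b) = 1/3"
    unfolding complex_norm_square by (simp add: mult.commute)
qed

lemma sic_design:
  assumes "sic \<phi>"
  shows "\<forall>b1\<in>{0,1}. \<forall>b2\<in>{0,1}. \<forall>b3\<in>{0,1}. \<forall>b4\<in>{0::nat,1}.
    (\<Sum>j\<in>{1..4}. \<phi> j b1 * cnj (\<phi> j b2) * \<phi> j b3 * cnj (\<phi> j b4))
    = complex_of_real (2/3 * ((if b1 = b2 \<and> b3 = b4 then 1 else 0) + (if b1 = b4 \<and> b3 = b2 then 1 else 0)))"
proof -
  define B where "B = {0::nat, 1}"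
  define J where "J = {1..4::nat}"
  define ip where "ip j k = (\<Sum>b\<in>B. cnj (\<phi> j b) * \<phi> k b)" for j k
  define L where "L b1 b2 b3 b4 = (\<Sum>j\<in>J. \<phi> j b1 * cnj (\<phi> j b2) * \<phi> j b3 * cnj (\<phi> j b4))" for b1 b2 b3 b4
  define r :: "nat \<Rightarrow> nat \<Rightarrow> nat \<Rightarrow> nat \<Rightarrow> real"
    where "r b1 b2 b3 b4 = 2/3 * ((if b1 = b2 \<and> b3 = b4 then 1 else 0) + (if b1 = b4 \<and> b3 = b2 then 1 else 0))" for b1 b2 b3 b4
  define R where "R b1 b2 b3 b4 = complex_of_real (r b1 b2 b3 b4)" for b1 b2 b3 b4
  have ipjj: "ip j j = 1" if "j \<in> J" for j using sic_facts(1)[OF assms] that unfolding ip_def B_def J_def by blast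
  have ipjk: "ip j k * cnj (ip j k) = 1/3" if "j \<in> J" "k \<in> J" "j \<noteq> k" for j k
    using sic_facts(2)[OF assms] that unfolding ip_def B_def J_def by blast
  have T1: "(\<Sum>b1\<in>B. \<Sum>b2\<in>B. \<Sum>b3\<in>B. \<Sum>b4\<in>B. L b1 b2 b3 b4 * cnj (L b1 b2 b3 b4)) = 16/3"
  proof -
    have "(\<Sum>b1\<in>B. \<Sum>b2\<in>B. \<Sum>b3\<in>B. \<Sum>b4\<in>B. L b1 b2 b3 b4 * cnj (L b1 b2 b3 b4))
      = (\<Sum>b1\<in>B. \<Sum>b2\<in>B. \<Sum>b3\<in>B. \<Sum>b4\<in>B. \<Sum>j\<in>J. \<Sum>k\<in>J.
          (\<phi> j b1 * cnj (\<phi> k b1)) * (cnj (\<phi> j b2) * \<phi> k b2) * (\<phi> j b3 * cnj (\<phi> k b3)) * (cnj (\<phi> j b4) * \<phi> k b4))"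
      unfolding L_def cnj_sum sum_product by (simp add: mult_ac)
    also have "\<dots> = (\<Sum>j\<in>J. \<Sum>k\<in>J. \<Sum>b1\<in>B. \<Sum>b2\<in>B. \<Sum>b3\<in>B. \<Sum>b4\<in>B.
          (\<phi> j b1 * cnj (\<phi> k b1)) * (cnj (\<phi> j b2) * \<phi> k b2) * (\<phi> j b3 * cnj (\<phi> k b3)) * (cnj (\<phi> j b4) * \<phi> k b4))"
      by (simp only: sw3[where B=B and J=J])
    also have "\<dots> = (\<Sum>j\<in>J. \<Sum>k\<in>J. cnj (ip j k) * ip j k * cnj (ip j k) * ip j k)"
      unfolding fac4 ip_def cnj_sum by (simp add: mult_ac)
    also have "\<dots> = (\<Sum>j\<in>J. \<Sum>k\<in>J. if j = k then 1 else 1/9)"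
    proof (intro sum.cong refl)
      fix j k assume "j \<in> J" "k \<in> J"
      thus "cnj (ip j k) * ip j k * cnj (ip j k) * ip j k = (if j = k then 1 else 1/9)"
      proof (cases "j = k")
        case True thus ?thesis using ipjj \<open>j \<in> J\<close> by simp
      next
        case False
        have "cnj (ip j k) * ip j k * cnj (ip j k) * ip j k = (ip j k * cnj (ip j k)) * (ip j k * cnj (ip j k))"
          by (simp add: mult_ac)
        thus ?thesis using ipjk[of j k] False \<open>j \<in> J\<close> \<open>k \<in> J\<close> by simp
      qed
    qed
    also have "\<dots> = 16/3" unfolding J_def J4 by simp
    finally show ?thesis .
  qed
  have nj: "\<phi> j 0 * cnj (\<phi> j 0) + \<phi> j 1 * cnj (\<phi> j 1) = 1" if "j \<in> J" for j
    using ipjj[OF that] unfolding ip_def B_def by (simp add: mult.commute)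
  have T2: "(\<Sum>b1\<in>B. \<Sum>b2\<in>B. \<Sum>b3\<in>B. \<Sum>b4\<in>B. L b1 b2 b3 b4 * R b1 b2 b3 b4) = 16/3"
  proof -
    have "(\<Sum>b1\<in>B. \<Sum>b2\<in>B. \<Sum>b3\<in>B. \<Sum>b4\<in>B. L b1 b2 b3 b4 * R b1 b2 b3 b4)
      = (\<Sum>b1\<in>B. \<Sum>b2\<in>B. \<Sum>b3\<in>B. \<Sum>b4\<in>B. \<Sum>j\<in>J. \<phi> j b1 * cnj (\<phi> j b2) * \<phi> j b3 * cnj (\<phi> j b4) * R b1 b2 b3 b4)"
      unfolding L_def sum_distrib_right ..
    also have "\<dots> = (\<Sum>j\<in>J. \<Sum>b1\<in>B. \<Sum>b2\<in>B. \<Sum>b3\<in>B. \<Sum>b4\<in>B. \<phi> j b1 * cnj (\<phi> j b2) * \<phi> j b3 * cnj (\<phi> j b4) * R b1 b2 b3 b4)"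
      by (simp only: sum.swap[where A=B and B=J])
    also have "\<dots> = (\<Sum>j\<in>J. 4/3 * (\<phi> j 0 * cnj (\<phi> j 0) + \<phi> j 1 * cnj (\<phi> j 1))^2)"
      unfolding B_def R_def r_def by (intro sum.cong refl) (simp add: algebra_simps power2_eq_square)
    also have "\<dots> = (\<Sum>j\<in>J. 4/3)" using nj by (intro sum.cong refl) simp
    also have "\<dots> = 16/3" unfolding J_def by simp
    finally show ?thesis .
  qed
  have cR: "cnj (R b1 b2 b3 b4) = R b1 b2 b3 b4" for b1 b2 b3 b4 unfolding R_def by (rule complex_cnj_complex_of_real)
  have T3: "(\<Sum>b1\<in>B. \<Sum>b2\<in>B. \<Sum>b3\<in>B. \<Sum>b4\<in>B. R b1 b2 b3 b4 * R b1 b2 b3 b4) = 16/3"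
  proof -
    have "(\<Sum>b1\<in>B. \<Sum>b2\<in>B. \<Sum>b3\<in>B. \<Sum>b4\<in>B. r b1 b2 b3 b4 * r b1 b2 b3 b4) = 16/3"
      unfolding B_def r_def by simp
    hence "complex_of_real (\<Sum>b1\<in>B. \<Sum>b2\<in>B. \<Sum>b3\<in>B. \<Sum>b4\<in>B. r b1 b2 b3 b4 * r b1 b2 b3 b4) = complex_of_real (16/3)" by (rule arg_cong)
    thus ?thesis unfolding R_def of_real_sum of_real_mult by simp
  qed
  have T2': "(\<Sum>b1\<in>B. \<Sum>b2\<in>B. \<Sum>b3\<in>B. \<Sum>b4\<in>B. R b1 b2 b3 b4 * cnj (L b1 b2 b3 b4)) = 16/3"
  proof -
    have "(\<Sum>b1\<in>B. \<Sum>b2\<in>B. \<Sum>b3\<in>B. \<Sum>b4\<in>B. R b1 b2 b3 b4 * cnj (L b1 b2 b3 b4))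
       = cnj (\<Sum>b1\<in>B. \<Sum>b2\<in>B. \<Sum>b3\<in>B. \<Sum>b4\<in>B. L b1 b2 b3 b4 * R b1 b2 b3 b4)"
      unfolding cnj_sum complex_cnj_mult cR by (simp only: mult.commute)
    thus ?thesis using T2 by simp
  qed
  have Z: "(\<Sum>b1\<in>B. \<Sum>b2\<in>B. \<Sum>b3\<in>B. \<Sum>b4\<in>B.
      (L b1 b2 b3 b4 - R b1 b2 b3 b4) * cnj (L b1 b2 b3 b4 - R b1 b2 b3 b4)) = 0"
  proof -
    have e: "(L b1 b2 b3 b4 - R b1 b2 b3 b4) * cnj (L b1 b2 b3 b4 - R b1 b2 b3 b4) =
       L b1 b2 b3 b4 * cnj (L b1 b2 b3 b4) - L b1 b2 b3 b4 * R b1 b2 b3 b4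
       - R b1 b2 b3 b4 * cnj (L b1 b2 b3 b4) + R b1 b2 b3 b4 * R b1 b2 b3 b4" for b1 b2 b3 b4
      unfolding complex_cnj_diff cR by (simp add: algebra_simps)
    have "(\<Sum>b1\<in>B. \<Sum>b2\<in>B. \<Sum>b3\<in>B. \<Sum>b4\<in>B.
      (L b1 b2 b3 b4 - R b1 b2 b3 b4) * cnj (L b1 b2 b3 b4 - R b1 b2 b3 b4)) =
      (\<Sum>b1\<in>B. \<Sum>b2\<in>B. \<Sum>b3\<in>B. \<Sum>b4\<in>B. L b1 b2 b3 b4 * cnj (L b1 b2 b3 b4))
      - (\<Sum>b1\<in>B. \<Sum>b2\<in>B. \<Sum>b3\<in>B. \<Sum>b4\<in>B. L b1 b2 b3 b4 * R b1 b2 b3 b4)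
      - (\<Sum>b1\<in>B. \<Sum>b2\<in>B. \<Sum>b3\<in>B. \<Sum>b4\<in>B. R b1 b2 b3 b4 * cnj (L b1 b2 b3 b4))
      + (\<Sum>b1\<in>B. \<Sum>b2\<in>B. \<Sum>b3\<in>B. \<Sum>b4\<in>B. R b1 b2 b3 b4 * R b1 b2 b3 b4)"
      unfolding e by (simp only: sum_subtractf sum.distrib)
    thus ?thesis using T1 T2 T2' T3 by simp
  qed
  have Zr: "(\<Sum>b1\<in>B. \<Sum>b2\<in>B. \<Sum>b3\<in>B. \<Sum>b4\<in>B. (cmod (L b1 b2 b3 b4 - R b1 b2 b3 b4))^2) = 0"
  proof -
    have "complex_of_real (\<Sum>b1\<in>B. \<Sum>b2\<in>B. \<Sum>b3\<in>B. \<Sum>b4\<in>B. (cmod (L b1 b2 b3 b4 - R b1 b2 b3 b4))^2) = 0"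
      unfolding of_real_sum complex_norm_square by (rule Z)
    thus ?thesis by (simp only: of_real_eq_0_iff)
  qed
  have "\<forall>b1\<in>B. \<forall>b2\<in>B. \<forall>b3\<in>B. \<forall>b4\<in>B. (cmod (L b1 b2 b3 b4 - R b1 b2 b3 b4))^2 = 0"
    by (rule sum4_zero[OF _ _ Zr]) (auto simp: B_def)
  hence "\<forall>b1\<in>B. \<forall>b2\<in>B. \<forall>b3\<in>B. \<forall>b4\<in>B. L b1 b2 b3 b4 = R b1 b2 b3 b4"
    by (simp only: power_eq_0_iff norm_eq_zero right_minus_eq zero_neq_numeral zero_less_numeral simp_thms)
  thus ?thesis unfolding B_def L_def R_def r_def J_def .
qed

lemma povm_eq: "povm_elem \<phi> j b b' = \<phi> j b * cnj (\<phi> j b') / 2"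
proof -
  have s: "complex_of_real (sqrt 2) * complex_of_real (sqrt 2) = 2"
    by (simp flip: of_real_mult)
  have "povm_elem \<phi> j b b' = \<phi> j b * cnj (\<phi> j b') / (complex_of_real (sqrt 2) * complex_of_real (sqrt 2))"
    unfolding povm_elem_def complex_cnj_divide complex_cnj_complex_of_real by (rule times_divide_times_eq)
  thus ?thesis unfolding s .
qed
lemma sic_complete:
  assumes "sic \<phi>" "b \<in> {0,1}" "b' \<in> {0,1}"
  shows "(\<Sum>j\<in>{1..4}. povm_elem \<phi> j b b') = (if b = b' then 1 else 0)"
proof -
  have D: "\<And>c. c \<in> {0,1} \<Longrightarrow> (\<Sum>j\<in>{1..4}. \<phi> j b * cnj (\<phi> j b') * \<phi> j c * cnj (\<phi> j c))
    = complex_of_real (2/3 * ((if b = b' \<and> c = c then 1 else 0) + (if b = c \<and> c = b' then 1 else 0)))"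
    using sic_design[OF assms(1)] assms(2,3) by blast
  have "(\<Sum>c\<in>{0::nat,1}. \<Sum>j\<in>{1..4}. \<phi> j b * cnj (\<phi> j b') * \<phi> j c * cnj (\<phi> j c))
      = (\<Sum>c\<in>{0::nat,1}. complex_of_real (2/3 * ((if b = b' \<and> c = c then 1 else 0) + (if b = c \<and> c = b' then 1 else 0))))"
    using D by (intro sum.cong) auto
  also have "\<dots> = 2 * (if b = b' then 1 else 0)" using assms(2,3) by (elim insertE; simp)
  finally have 1: "(\<Sum>c\<in>{0::nat,1}. \<Sum>j\<in>{1..4}. \<phi> j b * cnj (\<phi> j b') * \<phi> j c * cnj (\<phi> j c)) = 2 * (if b = b' then 1 else 0)" .
  have "(\<Sum>c\<in>{0::nat,1}. \<Sum>j\<in>{1..4}. \<phi> j b * cnj (\<phi> j b') * \<phi> j c * cnj (\<phi> j c))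
     = (\<Sum>j\<in>{1..4}. \<phi> j b * cnj (\<phi> j b') * (\<Sum>c\<in>{0::nat,1}. cnj (\<phi> j c) * \<phi> j c))"
    by (subst sum.swap, rule sum.cong[OF refl], subst sum_distrib_left, rule sum.cong[OF refl], simp add: mult_ac)
  also have "\<dots> = (\<Sum>j\<in>{1..4}. \<phi> j b * cnj (\<phi> j b'))"
    using sic_facts(1)[OF assms(1)] by (intro sum.cong) auto
  finally have 2: "(\<Sum>j\<in>{1..4}. \<phi> j b * cnj (\<phi> j b')) = 2 * (if b = b' then 1 else 0)" using 1 by simp
  show ?thesis unfolding povm_eq sum_divide_distrib[symmetric] 2 by simp
qed

lemma sic_pair:
  assumes "sic \<phi>" "y \<in> {0,1}" "x \<in> {0,1}" "y' \<in> {0,1}" "x' \<in> {0,1}"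
  shows "(\<Sum>j\<in>{1..4}. povm_elem \<phi> j y x * povm_elem \<phi> j y' x')
     = 1/6 * ((if y = x \<and> y' = x' then 1 else 0) + (if y = x' \<and> y' = x then 1 else 0))"
proof -
  have D: "(\<Sum>j\<in>{1..4}. \<phi> j y * cnj (\<phi> j x) * \<phi> j y' * cnj (\<phi> j x'))
    = complex_of_real (2/3 * ((if y = x \<and> y' = x' then 1 else 0) + (if y = x' \<and> y' = x then 1 else 0)))"
    using sic_design[OF assms(1)] assms(2-5) by blast
  have "(\<Sum>j\<in>{1..4}. povm_elem \<phi> j y x * povm_elem \<phi> j y' x') = (\<Sum>j\<in>{1..4}. \<phi> j y * cnj (\<phi> j x) * \<phi> j y' * cnj (\<phi> j x')) / 4"
    unfolding povm_eq sum_divide_distrib by (intro sum.cong) (auto simp: mult_ac)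
  also have "\<dots> = 1/6 * ((if y = x \<and> y' = x' then 1 else 0) + (if y = x' \<and> y' = x then 1 else 0))"
    unfolding D using assms(2-5) by (elim insertE; simp)
  finally show ?thesis .
qed


definition Pc :: "nat \<Rightarrow> ((nat \<Rightarrow> nat) \<Rightarrow> complex) \<Rightarrow> (nat \<Rightarrow> nat \<Rightarrow> complex) \<Rightarrow> nat set \<Rightarrow> (nat \<Rightarrow> nat) \<Rightarrow> complex" where
  "Pc n \<psi> \<phi> S q = (\<Sum>x\<in>bits {1..n}. \<Sum>y\<in>bits {1..n}.
      (\<psi> x * cnj (\<psi> y)) *
      ((\<Prod>i\<in>S. povm_elem \<phi> (q i) (y i) (x i)) *
       (if \<forall>i\<in>{1..n} - S. y i = x i then 1 else 0)))"

lemma sic_prob_Pc: "sic_prob n \<psi> \<phi> S q = Re (Pc n \<psi> \<phi> S q)"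
  unfolding sic_prob_def Pc_def ..

lemma finite_bits[simp]: "finite A \<Longrightarrow> finite (bits A)"
  unfolding bits_def by (simp add: finite_PiE)

lemma bits_val: "x \<in> bits A \<Longrightarrow> i \<in> A \<Longrightarrow> x i \<in> {0,1}"
  unfolding bits_def by auto

lemma bits_out: "x \<in> bits A \<Longrightarrow> i \<notin> A \<Longrightarrow> x i = undefined"
  unfolding bits_def by auto

lemma bits_eq: "x \<in> bits A \<Longrightarrow> y \<in> bits A \<Longrightarrow> (\<forall>i\<in>A. x i = y i) \<Longrightarrow> x = y"
  unfolding bits_def by (rule extensionalityI[of _ A]) (auto simp: PiE_def)

lemma prod_ind:
  assumes "finite S"
  shows "(\<Prod>i\<in>S. (if P i then 1 else 0 :: 'a :: comm_semiring_1)) = (if \<forall>i\<in>S. P i then 1 else 0)"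
  using assms by (induction S rule: finite_induct) auto

lemma pure_sum:
  assumes "pure_state n \<psi>"
  shows "(\<Sum>x\<in>bits {1..n}. \<psi> x * cnj (\<psi> x)) = 1"
proof -
  have "complex_of_real (\<Sum>x\<in>bits {1..n}. (cmod (\<psi> x))\<^sup>2) = 1"
    using assms unfolding pure_state_def by simp
  thus ?thesis unfolding of_real_sum complex_norm_square .
qed

lemma Pc_sum:
  assumes "pure_state n \<psi>" "sic \<phi>" "S \<subseteq> {1..n}"
  shows "(\<Sum>q\<in>S \<rightarrow>\<^sub>E {1..4}. Pc n \<psi> \<phi> S q) = 1"
proof -
  define U where "U = {1..n}"
  define X where "X = bits U"
  have fS: "finite S" using assms(3) finite_subset by blast
  have fX: "finite X" unfolding X_def U_def by simp
  have "(\<Sum>q\<in>S \<rightarrow>\<^sub>E {1..4}. Pc n \<psi> \<phi> S q) =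
    (\<Sum>x\<in>X. \<Sum>y\<in>X. \<Sum>q\<in>S \<rightarrow>\<^sub>E {1..4}. (\<psi> x * cnj (\<psi> y)) *
      ((\<Prod>i\<in>S. povm_elem \<phi> (q i) (y i) (x i)) * (if \<forall>i\<in>U - S. y i = x i then 1 else 0)))"
    unfolding Pc_def X_def U_def
    by (subst sum.swap, rule sum.cong[OF refl], rule sum.swap)
  also have "\<dots> = (\<Sum>x\<in>X. \<Sum>y\<in>X. (\<psi> x * cnj (\<psi> y)) * (if y = x then 1 else 0))"
  proof (intro sum.cong refl)
    fix x y assume x: "x \<in> X" and y: "y \<in> X"
    have "(\<Sum>q\<in>S \<rightarrow>\<^sub>E {1..4}. \<Prod>i\<in>S. povm_elem \<phi> (q i) (y i) (x i))
        = (\<Prod>i\<in>S. \<Sum>j\<in>{1..4}. povm_elem \<phi> j (y i) (x i))"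
      by (rule prod_sum_PiE[symmetric]) (auto simp: fS)
    also have "\<dots> = (\<Prod>i\<in>S. if y i = x i then 1 else 0)"
      using x y assms(3) unfolding X_def U_def
      by (intro prod.cong refl sic_complete[OF assms(2)]; meson bits_val subsetD)
    also have "\<dots> = (if \<forall>i\<in>S. y i = x i then 1 else 0)" by (rule prod_ind[OF fS])
    finally have P: "(\<Sum>q\<in>S \<rightarrow>\<^sub>E {1..4}. \<Prod>i\<in>S. povm_elem \<phi> (q i) (y i) (x i)) = (if \<forall>i\<in>S. y i = x i then 1 else 0)" .
    have E: "((\<forall>i\<in>S. y i = x i) \<and> (\<forall>i\<in>U - S. y i = x i)) = (y = x)"
      using x y bits_eq[of y U x] unfolding X_def by auto
    show "(\<Sum>q\<in>S \<rightarrow>\<^sub>E {1..4}. (\<psi> x * cnj (\<psi> y)) *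
      ((\<Prod>i\<in>S. povm_elem \<phi> (q i) (y i) (x i)) * (if \<forall>i\<in>U - S. y i = x i then 1 else 0)))
      = (\<psi> x * cnj (\<psi> y)) * (if y = x then 1 else 0)"
      unfolding sum_distrib_left[symmetric] sum_distrib_right[symmetric] P using E
      by (auto simp del: sum_distrib_left sum_distrib_right)
  qed
  also have "\<dots> = (\<Sum>x\<in>X. \<psi> x * cnj (\<psi> x))"
    by (intro sum.cong refl) (simp add: fX if_distrib cong: if_cong)
  also have "\<dots> = 1" using pure_sum[OF assms(1)] unfolding X_def U_def .
  finally show ?thesis .
qed

lemma ind_decomp:
  assumes "x \<in> bits U" "y \<in> bits U" "R \<subseteq> U" "finite U"
  shows "(if \<forall>i\<in>R. y i = x i then 1 else 0 :: complex) =
    (\<Sum>c\<in>bits R. (if restrict x R = c then 1 else 0) * (if restrict y R = c then 1 else 0))"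
proof -
  have xr: "restrict x R \<in> bits R" using assms unfolding bits_def by (auto simp: PiE_iff subset_iff)
  have "(\<Sum>c\<in>bits R. (if restrict x R = c then 1 else 0) * (if restrict y R = c then 1 else 0 :: complex))
     = (\<Sum>c\<in>bits R. if restrict x R = c then (if restrict y R = restrict x R then 1 else 0) else 0)"
    by (intro sum.cong refl) auto
  also have "\<dots> = (if restrict y R = restrict x R then 1 else 0)"
    using xr assms(3,4) by (subst sum.delta') (auto simp: finite_subset)
  finally have c1: "(\<Sum>c\<in>bits R. (if restrict x R = c then 1 else 0) * (if restrict y R = c then 1 else 0 :: complex))
     = (if restrict y R = restrict x R then 1 else 0)" .
  have E: "(restrict y R = restrict x R) = (\<forall>i\<in>R. y i = x i)"
    by (metis restrict_apply' restrict_ext)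
  show ?thesis by (simp only: c1 E)
qed

definition vq :: "((nat \<Rightarrow> nat) \<Rightarrow> complex) \<Rightarrow> (nat \<Rightarrow> nat \<Rightarrow> complex) \<Rightarrow> nat set \<Rightarrow> (nat \<Rightarrow> nat) \<Rightarrow> (nat \<Rightarrow> nat) \<Rightarrow> complex" where
  "vq \<psi> \<phi> S q x = \<psi> x * (\<Prod>i\<in>S. cnj (\<phi> (q i) (x i) / complex_of_real (sqrt 2)))"

definition wq where
  "wq n \<psi> \<phi> S q c = (\<Sum>x\<in>bits {1..n}. if restrict x ({1..n} - S) = c then vq \<psi> \<phi> S q x else 0)"

lemma Pc_sq:
  assumes "S \<subseteq> {1..n}"
  shows "Pc n \<psi> \<phi> S q = (\<Sum>c\<in>bits ({1..n} - S). wq n \<psi> \<phi> S q c * cnj (wq n \<psi> \<phi> S q c))"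
proof -
  define U where "U = {1..n}"
  define X where "X = bits U"
  define R where "R = U - S"
  have fX: "finite X" unfolding X_def U_def by simp
  have fR: "finite (bits R)" unfolding R_def U_def by simp
  have "Pc n \<psi> \<phi> S q = (\<Sum>x\<in>X. \<Sum>y\<in>X. \<Sum>c\<in>bits R.
      (if restrict x R = c then vq \<psi> \<phi> S q x else 0) * cnj (if restrict y R = c then vq \<psi> \<phi> S q y else 0))"
    unfolding Pc_def X_def[symmetric] U_def[symmetric] R_def[symmetric]
  proof (intro sum.cong refl)
    fix x y assume x: "x \<in> X" and y: "y \<in> X"
    have A: "\<psi> x * cnj (\<psi> y) * (\<Prod>i\<in>S. povm_elem \<phi> (q i) (y i) (x i)) = vq \<psi> \<phi> S q x * cnj (vq \<psi> \<phi> S q y)"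
      unfolding vq_def povm_elem_def prod.distrib cnj_prod complex_cnj_mult complex_cnj_cnj
      by (simp add: mult_ac)
    have B: "(if \<forall>i\<in>R. y i = x i then 1 else 0 :: complex) =
      (\<Sum>c\<in>bits R. (if restrict x R = c then 1 else 0) * (if restrict y R = c then 1 else 0))"
      using x y unfolding X_def R_def U_def by (intro ind_decomp) auto
    have C: "(\<Sum>c\<in>bits R. (if restrict x R = c then vq \<psi> \<phi> S q x else 0) * cnj (if restrict y R = c then vq \<psi> \<phi> S q y else 0))
      = vq \<psi> \<phi> S q x * cnj (vq \<psi> \<phi> S q y) * (\<Sum>c\<in>bits R. (if restrict x R = c then 1 else 0) * (if restrict y R = c then 1 else 0))"
      unfolding sum_distrib_left by (intro sum.cong refl) auto
    show "\<psi> x * cnj (\<psi> y) * ((\<Prod>i\<in>S. povm_elem \<phi> (q i) (y i) (x i)) * (if \<forall>i\<in>R. y i = x i then 1 else 0)) =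
      (\<Sum>c\<in>bits R. (if restrict x R = c then vq \<psi> \<phi> S q x else 0) * cnj (if restrict y R = c then vq \<psi> \<phi> S q y else 0))"
      unfolding C B[symmetric] A[symmetric] by (simp only: mult.assoc)
  qed
  also have "\<dots> = (\<Sum>c\<in>bits R. \<Sum>x\<in>X. \<Sum>y\<in>X.
      (if restrict x R = c then vq \<psi> \<phi> S q x else 0) * cnj (if restrict y R = c then vq \<psi> \<phi> S q y else 0))"
    by (subst sum.swap, subst (2) sum.swap, rule refl)
  also have "\<dots> = (\<Sum>c\<in>bits R. wq n \<psi> \<phi> S q c * cnj (wq n \<psi> \<phi> S q c))"
    unfolding wq_def X_def[symmetric] U_def[symmetric] R_def[symmetric] cnj_sum sum_product ..
  finally show ?thesis unfolding R_def U_def .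
qed

lemma Pc_real:
  assumes "S \<subseteq> {1..n}"
  shows "Pc n \<psi> \<phi> S q = complex_of_real (\<Sum>c\<in>bits ({1..n} - S). (cmod (wq n \<psi> \<phi> S q c))\<^sup>2)"
  unfolding Pc_sq[OF assms] of_real_sum complex_norm_square ..

lemma sic_prob_eq:
  assumes "S \<subseteq> {1..n}"
  shows "sic_prob n \<psi> \<phi> S q = (\<Sum>c\<in>bits ({1..n} - S). (cmod (wq n \<psi> \<phi> S q c))\<^sup>2)"
  unfolding sic_prob_Pc Pc_real[OF assms] by simp

lemma sic_prob_nonneg:
  assumes "S \<subseteq> {1..n}"
  shows "0 \<le> sic_prob n \<psi> \<phi> S q"
  unfolding sic_prob_eq[OF assms] by (simp add: sum_nonneg)

lemma Pc_of_real:
  assumes "S \<subseteq> {1..n}"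
  shows "Pc n \<psi> \<phi> S q = complex_of_real (sic_prob n \<psi> \<phi> S q)"
  unfolding sic_prob_eq[OF assms] Pc_real[OF assms] ..

lemma Gsum:
  assumes "sic \<phi>" "S \<subseteq> {1..n}" "q \<in> S \<rightarrow>\<^sub>E {1..4}" "c \<in> bits ({1..n} - S)"
  shows "(\<Sum>x\<in>bits {1..n}. if restrict x ({1..n} - S) = c
           then (cmod (\<Prod>i\<in>S. cnj (\<phi> (q i) (x i) / complex_of_real (sqrt 2))))\<^sup>2 else 0) = (1/2) ^ card S"
proof -
  define U where "U = {1..n::nat}"
  define R where "R = U - S"
  have fU: "finite U" unfolding U_def by simp
  have fS: "finite S" using assms(2) finite_subset by blast
  have SU: "S \<subseteq> U" using assms(2) unfolding U_def .
  define h where "h i b = (if i \<in> S then (cmod (\<phi> (q i) b))\<^sup>2 / 2 else if b = c i then 1 else 0)" for i b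
  have c_ext: "restrict c R = c" using assms(4) unfolding R_def U_def bits_def by (simp add: extensional_restrict PiE_iff)
  have summand: "(if restrict x R = c then (cmod (\<Prod>i\<in>S. cnj (\<phi> (q i) (x i) / complex_of_real (sqrt 2))))\<^sup>2 else 0)
      = (\<Prod>i\<in>U. h i (x i))" for x
  proof -
    have n2: "(cmod (\<Prod>i\<in>S. cnj (\<phi> (q i) (x i) / complex_of_real (sqrt 2))))\<^sup>2 = (\<Prod>i\<in>S. (cmod (\<phi> (q i) (x i)))\<^sup>2 / 2)"
      unfolding prod_norm[symmetric] prod_power_distrib by (intro prod.cong refl) (simp add: norm_divide power_divide)
    have "(\<Prod>i\<in>U. h i (x i)) = (\<Prod>i\<in>U - S. h i (x i)) * (\<Prod>i\<in>S. h i (x i))"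
      by (rule prod.subset_diff[OF SU fU])
    also have "(\<Prod>i\<in>S. h i (x i)) = (\<Prod>i\<in>S. (cmod (\<phi> (q i) (x i)))\<^sup>2 / 2)"
      unfolding h_def by (intro prod.cong refl) auto
    also have "(\<Prod>i\<in>U - S. h i (x i)) = (\<Prod>i\<in>R. if x i = c i then 1 else 0)"
      unfolding h_def R_def by (intro prod.cong refl) auto
    also have "\<dots> = (if \<forall>i\<in>R. x i = c i then 1 else 0)" by (rule prod_ind) (simp add: R_def fU)
    also have "(\<forall>i\<in>R. x i = c i) = (restrict x R = c)"
      using c_ext by (metis restrict_apply' restrict_ext)
    finally show ?thesis unfolding n2 by simp
  qed
  have "(\<Sum>x\<in>bits U. if restrict x R = c then (cmod (\<Prod>i\<in>S. cnj (\<phi> (q i) (x i) / complex_of_real (sqrt 2))))\<^sup>2 else 0)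
      = (\<Sum>x\<in>PiE U (\<lambda>_. {0,1}). \<Prod>i\<in>U. h i (x i))"
    unfolding summand bits_def ..
  also have "\<dots> = (\<Prod>i\<in>U. \<Sum>b\<in>{0,1}. h i b)"
    by (rule prod_sum_PiE[symmetric]) (auto simp: fU)
  also have "\<dots> = (\<Prod>i\<in>U. if i \<in> S then 1/2 else 1)"
  proof (intro prod.cong refl)
    fix i assume i: "i \<in> U"
    show "(\<Sum>b\<in>{0,1}. h i b) = (if i \<in> S then 1/2 else 1)"
    proof (cases "i \<in> S")
      case True
      hence "q i \<in> {1..4}" using assms(3) by auto
      hence "(\<Sum>b\<in>{0::nat,1}. (cmod (\<phi> (q i) b))\<^sup>2) = 1" using assms(1) unfolding sic_def by blast
      hence "(\<Sum>b\<in>{0::nat,1}. (cmod (\<phi> (q i) b))\<^sup>2 / 2) = 1/2" unfolding sum_divide_distrib[symmetric] by simp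
      thus ?thesis unfolding h_def using True by simp
    next
      case False
      hence "c i \<in> {0,1}" using i assms(4) bits_val unfolding R_def U_def by blast
      thus ?thesis unfolding h_def using False by auto
    qed
  qed
  also have "\<dots> = (1/2) ^ card S"
    using fU SU by (simp add: prod.If_cases Int_absorb1 flip: Int_def)
  finally show ?thesis unfolding U_def R_def .
qed

lemma sic_prob_le:
  assumes "pure_state n \<psi>" "sic \<phi>" "S \<subseteq> {1..n}" "q \<in> S \<rightarrow>\<^sub>E {1..4}"
  shows "sic_prob n \<psi> \<phi> S q \<le> (1/2) ^ card S"
proof -
  define U where "U = {1..n::nat}"
  define R where "R = U - S"
  define X where "X = bits U"
  define G where "G x = (\<Prod>i\<in>S. cnj (\<phi> (q i) (x i) / complex_of_real (sqrt 2)))" for x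
  have fX: "finite X" unfolding X_def U_def by simp
  have fR: "finite (bits R)" unfolding R_def U_def by simp
  have bnd: "(cmod (wq n \<psi> \<phi> S q c))\<^sup>2 \<le> (1/2) ^ card S * (\<Sum>x\<in>X. if restrict x R = c then (cmod (\<psi> x))\<^sup>2 else 0)"
    if c: "c \<in> bits R" for c
  proof -
    define a where "a x = cmod (if restrict x R = c then \<psi> x else 0)" for x
    define b where "b x = cmod (if restrict x R = c then G x else 0)" for x
    have "wq n \<psi> \<phi> S q c = (\<Sum>x\<in>X. (if restrict x R = c then \<psi> x else 0) * (if restrict x R = c then G x else 0))"
      unfolding wq_def X_def U_def R_def G_def vq_def by (intro sum.cong refl) auto
    hence "cmod (wq n \<psi> \<phi> S q c) \<le> (\<Sum>x\<in>X. a x * b x)"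
      unfolding a_def b_def by (metis (no_types, lifting) norm_mult norm_sum sum.cong)
    hence "(cmod (wq n \<psi> \<phi> S q c))\<^sup>2 \<le> (\<Sum>x\<in>X. a x * b x)\<^sup>2"
      by (intro power_mono) auto
    also have "\<dots> \<le> (\<Sum>x\<in>X. (a x)\<^sup>2) * (\<Sum>x\<in>X. (b x)\<^sup>2)" by (rule Cauchy_Schwarz_ineq_sum)
    also have "(\<Sum>x\<in>X. (b x)\<^sup>2) = (1/2) ^ card S"
    proof -
      have "(\<Sum>x\<in>X. (b x)\<^sup>2) = (\<Sum>x\<in>bits {1..n}. if restrict x ({1..n} - S) = c
           then (cmod (\<Prod>i\<in>S. cnj (\<phi> (q i) (x i) / complex_of_real (sqrt 2))))\<^sup>2 else 0)"
        unfolding b_def X_def U_def R_def G_def by (intro sum.cong refl) auto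
      also have "\<dots> = (1/2) ^ card S" using Gsum[OF assms(2,3,4)] c unfolding R_def U_def by blast
      finally show ?thesis .
    qed
    also have "(\<Sum>x\<in>X. (a x)\<^sup>2) = (\<Sum>x\<in>X. if restrict x R = c then (cmod (\<psi> x))\<^sup>2 else 0)"
      unfolding a_def by (intro sum.cong refl) auto
    finally show ?thesis by (simp add: mult.commute)
  qed
  have "sic_prob n \<psi> \<phi> S q = (\<Sum>c\<in>bits R. (cmod (wq n \<psi> \<phi> S q c))\<^sup>2)"
    unfolding sic_prob_eq[OF assms(3)] R_def U_def ..
  also have "\<dots> \<le> (\<Sum>c\<in>bits R. (1/2) ^ card S * (\<Sum>x\<in>X. if restrict x R = c then (cmod (\<psi> x))\<^sup>2 else 0))"
    by (rule sum_mono) (rule bnd)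
  also have "\<dots> = (1/2) ^ card S * (\<Sum>x\<in>X. \<Sum>c\<in>bits R. if restrict x R = c then (cmod (\<psi> x))\<^sup>2 else 0)"
    unfolding sum_distrib_left[symmetric] by (subst sum.swap) (rule refl)
  also have "\<dots> = (1/2) ^ card S * (\<Sum>x\<in>X. (cmod (\<psi> x))\<^sup>2)"
  proof -
    have "(\<Sum>c\<in>bits R. if restrict x R = c then (cmod (\<psi> x))\<^sup>2 else 0) = (cmod (\<psi> x))\<^sup>2" if "x \<in> X" for x
    proof -
      have "restrict x R \<in> bits R" using that unfolding X_def R_def bits_def by (auto simp: PiE_iff)
      thus ?thesis using fR by simp
    qed
    thus ?thesis by (simp cong: sum.cong)
  qed
  also have "\<dots> = (1/2) ^ card S" using assms(1) unfolding pure_state_def X_def U_def by simp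
  finally show ?thesis .
qed


lemma merge_bits:
  assumes "x \<in> bits U" "x' \<in> bits U" "\<alpha> \<subseteq> U"
  shows "merge \<alpha> x' x \<in> bits U"
  using assms unfolding bits_def merge_def by (auto simp: PiE_iff extensional_def)

lemma merge_char:
  assumes "x \<in> bits U" "x' \<in> bits U" "y \<in> bits U" "y' \<in> bits U" "\<alpha> \<subseteq> S" "S \<subseteq> U"
  shows "((\<forall>i\<in>\<alpha>. y i = x' i \<and> y' i = x i) \<and> (\<forall>i\<in>S - \<alpha>. y i = x i \<and> y' i = x' i) \<and>
          (\<forall>i\<in>U - S. y i = x i) \<and> (\<forall>i\<in>U - S. y' i = x' i))
     = (y = merge \<alpha> x' x \<and> y' = merge \<alpha> x x')"
proof
  assume H: "(\<forall>i\<in>\<alpha>. y i = x' i \<and> y' i = x i) \<and> (\<forall>i\<in>S - \<alpha>. y i = x i \<and> y' i = x' i) \<and>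
          (\<forall>i\<in>U - S. y i = x i) \<and> (\<forall>i\<in>U - S. y' i = x' i)"
  have m1: "merge \<alpha> x' x \<in> bits U" and m2: "merge \<alpha> x x' \<in> bits U"
    using merge_bits assms by (meson order_trans)+
  have "y = merge \<alpha> x' x"
    by (rule bits_eq[OF assms(3) m1]) (use H assms(5,6) in \<open>auto simp: merge_def\<close>)
  moreover have "y' = merge \<alpha> x x'"
    by (rule bits_eq[OF assms(4) m2]) (use H assms(5,6) in \<open>auto simp: merge_def\<close>)
  ultimately show "y = merge \<alpha> x' x \<and> y' = merge \<alpha> x x'" ..
next
  assume "y = merge \<alpha> x' x \<and> y' = merge \<alpha> x x'"
  thus "(\<forall>i\<in>\<alpha>. y i = x' i \<and> y' i = x i) \<and> (\<forall>i\<in>S - \<alpha>. y i = x i \<and> y' i = x' i) \<and>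
          (\<forall>i\<in>U - S. y i = x i) \<and> (\<forall>i\<in>U - S. y' i = x' i)"
    using assms(5,6) by (auto simp: merge_def)
qed

lemma if_mult_ind:
  "(if A then 1 else 0) * (if B then 1 else 0) * (if C then 1 else (0::'a::comm_semiring_1)) = (if (A \<and> B \<and> C) then 1 else 0)"
  by simp

lemma inner_q:
  assumes "sic \<phi>" "S \<subseteq> {1..n}" "x \<in> bits {1..n}" "x' \<in> bits {1..n}" "y \<in> bits {1..n}" "y' \<in> bits {1..n}"
  shows "(\<Sum>q\<in>S \<rightarrow>\<^sub>E {1..4}. \<Prod>i\<in>S. povm_elem \<phi> (q i) (y i) (x i) * povm_elem \<phi> (q i) (y' i) (x' i))
          * (if \<forall>i\<in>{1..n} - S. y i = x i then 1 else 0) * (if \<forall>i\<in>{1..n} - S. y' i = x' i then 1 else 0)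
     = (1/6) ^ card S * (\<Sum>\<alpha>\<in>Pow S. if y = merge \<alpha> x' x \<and> y' = merge \<alpha> x x' then 1 else 0)"
proof -
  define U where "U = {1..n::nat}"
  have fS: "finite S" using assms(2) finite_subset by blast
  define f1 where "f1 i = (1/6::complex) * (if y i = x' i \<and> y' i = x i then 1 else 0)" for i
  define f2 where "f2 i = (1/6::complex) * (if y i = x i \<and> y' i = x' i then 1 else 0)" for i
  have "(\<Sum>q\<in>S \<rightarrow>\<^sub>E {1..4}. \<Prod>i\<in>S. povm_elem \<phi> (q i) (y i) (x i) * povm_elem \<phi> (q i) (y' i) (x' i))
     = (\<Prod>i\<in>S. \<Sum>j\<in>{1..4}. povm_elem \<phi> j (y i) (x i) * povm_elem \<phi> j (y' i) (x' i))"
    by (rule prod_sum_PiE[symmetric]) (auto simp: fS)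
  also have "\<dots> = (\<Prod>i\<in>S. f1 i + f2 i)"
  proof (intro prod.cong refl)
    fix i assume i: "i \<in> S"
    have v: "y i \<in> {0,1}" "x i \<in> {0,1}" "y' i \<in> {0,1}" "x' i \<in> {0,1}"
      using i assms(2-6) bits_val by (meson subsetD)+
    show "(\<Sum>j\<in>{1..4}. povm_elem \<phi> j (y i) (x i) * povm_elem \<phi> j (y' i) (x' i)) = f1 i + f2 i"
      unfolding sic_pair[OF assms(1) v] f1_def f2_def by (simp add: algebra_simps)
  qed
  also have "\<dots> = (\<Sum>\<alpha>\<in>Pow S. (\<Prod>i\<in>\<alpha>. f1 i) * (\<Prod>i\<in>S - \<alpha>. f2 i))"
    by (rule prod_add[OF fS])
  also have "\<dots> = (\<Sum>\<alpha>\<in>Pow S. (1/6) ^ card S *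
        (if (\<forall>i\<in>\<alpha>. y i = x' i \<and> y' i = x i) \<and> (\<forall>i\<in>S - \<alpha>. y i = x i \<and> y' i = x' i) then 1 else 0))"
  proof (intro sum.cong refl)
    fix \<alpha> assume a: "\<alpha> \<in> Pow S"
    have fa: "finite \<alpha>" using a fS finite_subset by blast
    have c: "card \<alpha> + card (S - \<alpha>) = card S" using a fS by (metis Pow_iff card_Diff_subset fa le_add_diff_inverse card_mono)
    have "(\<Prod>i\<in>\<alpha>. f1 i) = (1/6) ^ card \<alpha> * (if \<forall>i\<in>\<alpha>. y i = x' i \<and> y' i = x i then 1 else 0)"
      unfolding f1_def prod.distrib prod_ind[OF fa] by simp
    moreover have "(\<Prod>i\<in>S - \<alpha>. f2 i) = (1/6) ^ card (S - \<alpha>) * (if \<forall>i\<in>S - \<alpha>. y i = x i \<and> y' i = x' i then 1 else 0)"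
      unfolding f2_def prod.distrib prod_ind[OF finite_Diff[OF fS]] by simp
    ultimately show "(\<Prod>i\<in>\<alpha>. f1 i) * (\<Prod>i\<in>S - \<alpha>. f2 i) = (1/6) ^ card S *
        (if (\<forall>i\<in>\<alpha>. y i = x' i \<and> y' i = x i) \<and> (\<forall>i\<in>S - \<alpha>. y i = x i \<and> y' i = x' i) then 1 else 0)"
      by (simp add: c[symmetric] power_add)
  qed
  finally have P: "(\<Sum>q\<in>S \<rightarrow>\<^sub>E {1..4}. \<Prod>i\<in>S. povm_elem \<phi> (q i) (y i) (x i) * povm_elem \<phi> (q i) (y' i) (x' i))
     = (\<Sum>\<alpha>\<in>Pow S. (1/6) ^ card S *
        (if (\<forall>i\<in>\<alpha>. y i = x' i \<and> y' i = x i) \<and> (\<forall>i\<in>S - \<alpha>. y i = x i \<and> y' i = x' i) then 1 else 0))" .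
  have "(\<Sum>q\<in>S \<rightarrow>\<^sub>E {1..4}. \<Prod>i\<in>S. povm_elem \<phi> (q i) (y i) (x i) * povm_elem \<phi> (q i) (y' i) (x' i))
          * (if \<forall>i\<in>{1..n} - S. y i = x i then 1 else 0) * (if \<forall>i\<in>{1..n} - S. y' i = x' i then 1 else 0)
     = (\<Sum>\<alpha>\<in>Pow S. (1/6) ^ card S *
        (if (\<forall>i\<in>\<alpha>. y i = x' i \<and> y' i = x i) \<and> (\<forall>i\<in>S - \<alpha>. y i = x i \<and> y' i = x' i) then 1 else 0)
          * (if \<forall>i\<in>{1..n} - S. y i = x i then 1 else 0) * (if \<forall>i\<in>{1..n} - S. y' i = x' i then 1 else 0))"
    unfolding P by (simp only: sum_distrib_right)
  also have "\<dots> = (\<Sum>\<alpha>\<in>Pow S. (1/6) ^ card S * (if y = merge \<alpha> x' x \<and> y' = merge \<alpha> x x' then 1 else 0))"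
  proof (intro sum.cong refl)
    fix \<alpha> assume a: "\<alpha> \<in> Pow S"
    have E: "((\<forall>i\<in>\<alpha>. y i = x' i \<and> y' i = x i) \<and> (\<forall>i\<in>S - \<alpha>. y i = x i \<and> y' i = x' i) \<and>
          (\<forall>i\<in>U - S. y i = x i) \<and> (\<forall>i\<in>U - S. y' i = x' i))
       = (y = merge \<alpha> x' x \<and> y' = merge \<alpha> x x')"
      using a assms unfolding U_def by (intro merge_char) auto
    show "(1/6) ^ card S * (if (\<forall>i\<in>\<alpha>. y i = x' i \<and> y' i = x i) \<and> (\<forall>i\<in>S - \<alpha>. y i = x i \<and> y' i = x' i) then 1 else 0)
          * (if \<forall>i\<in>{1..n} - S. y i = x i then 1 else 0) * (if \<forall>i\<in>{1..n} - S. y' i = x' i then 1 else 0)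
        = (1/6) ^ card S * (if y = merge \<alpha> x' x \<and> y' = merge \<alpha> x x' then 1 else (0::complex))"
    proof -
      have X: "(if (\<forall>i\<in>\<alpha>. y i = x' i \<and> y' i = x i) \<and> (\<forall>i\<in>S - \<alpha>. y i = x i \<and> y' i = x' i) then 1 else 0)
          * (if \<forall>i\<in>{1..n} - S. y i = x i then 1 else 0) * (if \<forall>i\<in>{1..n} - S. y' i = x' i then 1 else (0::complex))
        = (if ((\<forall>i\<in>\<alpha>. y i = x' i \<and> y' i = x i) \<and> (\<forall>i\<in>S - \<alpha>. y i = x i \<and> y' i = x' i) \<and>
          (\<forall>i\<in>U - S. y i = x i) \<and> (\<forall>i\<in>U - S. y' i = x' i)) then 1 else 0)"
        unfolding U_def by (simp only: if_mult_ind conj_assoc)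
      show ?thesis unfolding mult.assoc X[unfolded E mult.assoc] ..
    qed
  qed
  also have "\<dots> = (1/6) ^ card S * (\<Sum>\<alpha>\<in>Pow S. if y = merge \<alpha> x' x \<and> y' = merge \<alpha> x x' then 1 else 0)"
    by (simp only: sum_distrib_left)
  finally show ?thesis .
qed

definition Purc :: "nat \<Rightarrow> ((nat \<Rightarrow> nat) \<Rightarrow> complex) \<Rightarrow> nat set \<Rightarrow> complex" where
  "Purc n \<psi> \<alpha> = (\<Sum>x\<in>bits {1..n}. \<Sum>x'\<in>bits {1..n}.
     \<psi> x * \<psi> x' * cnj (\<psi> (merge \<alpha> x' x)) * cnj (\<psi> (merge \<alpha> x x')))"

lemma delta2:
  assumes "finite X" "a \<in> X" "b \<in> X"
  shows "(\<Sum>y\<in>X. \<Sum>y'\<in>X. f y y' * (if y = a \<and> y' = b then 1 else (0::complex))) = f a b"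
proof -
  have "(\<Sum>y\<in>X. \<Sum>y'\<in>X. f y y' * (if y = a \<and> y' = b then 1 else (0::complex)))
      = (\<Sum>y\<in>X. if y = a then (\<Sum>y'\<in>X. if y' = b then f y y' else 0) else 0)"
    by (intro sum.cong refl) (simp add: if_distrib cong: if_cong)
  also have "\<dots> = f a b" using assms by simp
  finally show ?thesis .
qed

lemma Pc_sq_sum:
  assumes "sic \<phi>" "S \<subseteq> {1..n}"
  shows "(\<Sum>q\<in>S \<rightarrow>\<^sub>E {1..4}. (Pc n \<psi> \<phi> S q)\<^sup>2) = (1/6) ^ card S * (\<Sum>\<alpha>\<in>Pow S. Purc n \<psi> \<alpha>)"
proof -
  define X where "X = bits {1..n}"
  define A where "A = S \<rightarrow>\<^sub>E {1..4::nat}"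
  have fX: "finite X" unfolding X_def by simp
  have fS: "finite S" using assms(2) finite_subset by blast
  define c4 where "c4 x x' y y' = \<psi> x * cnj (\<psi> y) * \<psi> x' * cnj (\<psi> y')" for x x' y y'
  define I where "I (x::nat\<Rightarrow>nat) (y::nat\<Rightarrow>nat) = (if \<forall>i\<in>{1..n} - S. y i = x i then 1 else (0::complex))" for x y
  define T where "T q x x' y y' = (\<Prod>i\<in>S. povm_elem \<phi> (q i) (y i) (x i) * povm_elem \<phi> (q i) (y' i) (x' i))" for q x x' y y'
  have "(\<Sum>q\<in>A. (Pc n \<psi> \<phi> S q)\<^sup>2) = (\<Sum>q\<in>A. \<Sum>x\<in>X. \<Sum>x'\<in>X. \<Sum>y\<in>X. \<Sum>y'\<in>X. c4 x x' y y' * (T q x x' y y' * I x y * I x' y'))"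
    unfolding power2_eq_square Pc_def X_def[symmetric] sum_product
    by (intro sum.cong refl) (simp add: c4_def T_def I_def prod.distrib mult_ac)
  also have "\<dots> = (\<Sum>x\<in>X. \<Sum>x'\<in>X. \<Sum>y\<in>X. \<Sum>y'\<in>X. \<Sum>q\<in>A. c4 x x' y y' * (T q x x' y y' * I x y * I x' y'))"
    by (simp only: sum.swap[where A=A and B=X])
  also have "\<dots> = (\<Sum>x\<in>X. \<Sum>x'\<in>X. \<Sum>y\<in>X. \<Sum>y'\<in>X. c4 x x' y y' * ((1/6) ^ card S *
      (\<Sum>\<alpha>\<in>Pow S. if y = merge \<alpha> x' x \<and> y' = merge \<alpha> x x' then 1 else 0)))"
  proof (intro sum.cong refl)
    fix x x' y y' assume "x \<in> X" "x' \<in> X" "y \<in> X" "y' \<in> X"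
    hence "(\<Sum>q\<in>A. T q x x' y y') * I x y * I x' y' = (1/6) ^ card S *
      (\<Sum>\<alpha>\<in>Pow S. if y = merge \<alpha> x' x \<and> y' = merge \<alpha> x x' then 1 else 0)"
      unfolding T_def I_def A_def using assms unfolding X_def by (intro inner_q) auto
    thus "(\<Sum>q\<in>A. c4 x x' y y' * (T q x x' y y' * I x y * I x' y')) = c4 x x' y y' * ((1/6) ^ card S *
      (\<Sum>\<alpha>\<in>Pow S. if y = merge \<alpha> x' x \<and> y' = merge \<alpha> x x' then 1 else 0))"
      by (simp only: sum_distrib_left[symmetric] sum_distrib_right[symmetric])
  qed
  also have "\<dots> = (\<Sum>x\<in>X. \<Sum>x'\<in>X. (1/6) ^ card S * (\<Sum>\<alpha>\<in>Pow S.
      \<psi> x * \<psi> x' * cnj (\<psi> (merge \<alpha> x' x)) * cnj (\<psi> (merge \<alpha> x x'))))"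
  proof (intro sum.cong refl)
    fix x x' assume x: "x \<in> X" and x': "x' \<in> X"
    have "(\<Sum>y\<in>X. \<Sum>y'\<in>X. c4 x x' y y' * ((1/6) ^ card S *
      (\<Sum>\<alpha>\<in>Pow S. if y = merge \<alpha> x' x \<and> y' = merge \<alpha> x x' then 1 else 0)))
      = (1/6) ^ card S * (\<Sum>y\<in>X. \<Sum>y'\<in>X. \<Sum>\<alpha>\<in>Pow S. c4 x x' y y' * (if y = merge \<alpha> x' x \<and> y' = merge \<alpha> x x' then 1 else 0))"
      by (simp add: sum_distrib_left mult_ac)
    also have "\<dots> = (1/6) ^ card S * (\<Sum>\<alpha>\<in>Pow S. \<Sum>y\<in>X. \<Sum>y'\<in>X. c4 x x' y y' * (if y = merge \<alpha> x' x \<and> y' = merge \<alpha> x x' then 1 else 0))"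
      by (subst (2) sum.swap, subst sum.swap, rule refl)
    also have "\<dots> = (1/6) ^ card S * (\<Sum>\<alpha>\<in>Pow S. \<psi> x * \<psi> x' * cnj (\<psi> (merge \<alpha> x' x)) * cnj (\<psi> (merge \<alpha> x x')))"
    proof -
      have "(\<Sum>y\<in>X. \<Sum>y'\<in>X. c4 x x' y y' * (if y = merge \<alpha> x' x \<and> y' = merge \<alpha> x x' then 1 else 0))
          = \<psi> x * \<psi> x' * cnj (\<psi> (merge \<alpha> x' x)) * cnj (\<psi> (merge \<alpha> x x'))" if a: "\<alpha> \<in> Pow S" for \<alpha>
      proof -
        have "merge \<alpha> x' x \<in> X" "merge \<alpha> x x' \<in> X"
          using a assms(2) x x' merge_bits unfolding X_def by (meson PowD order_trans)+
        hence "(\<Sum>y\<in>X. \<Sum>y'\<in>X. c4 x x' y y' * (if y = merge \<alpha> x' x \<and> y' = merge \<alpha> x x' then 1 else 0))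
          = c4 x x' (merge \<alpha> x' x) (merge \<alpha> x x')" by (intro delta2[OF fX])
        thus ?thesis by (simp add: c4_def mult_ac)
      qed
      hence "(\<Sum>\<alpha>\<in>Pow S. \<Sum>y\<in>X. \<Sum>y'\<in>X. c4 x x' y y' * (if y = merge \<alpha> x' x \<and> y' = merge \<alpha> x x' then 1 else 0))
        = (\<Sum>\<alpha>\<in>Pow S. \<psi> x * \<psi> x' * cnj (\<psi> (merge \<alpha> x' x)) * cnj (\<psi> (merge \<alpha> x x')))"
        by (rule sum.cong[OF refl])
      thus ?thesis by (rule arg_cong)
    qed
    finally show "(\<Sum>y\<in>X. \<Sum>y'\<in>X. c4 x x' y y' * ((1/6) ^ card S *
      (\<Sum>\<alpha>\<in>Pow S. if y = merge \<alpha> x' x \<and> y' = merge \<alpha> x x' then 1 else 0)))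
      = (1/6) ^ card S * (\<Sum>\<alpha>\<in>Pow S. \<psi> x * \<psi> x' * cnj (\<psi> (merge \<alpha> x' x)) * cnj (\<psi> (merge \<alpha> x x')))" .
  qed
  also have "\<dots> = (1/6) ^ card S * (\<Sum>\<alpha>\<in>Pow S. Purc n \<psi> \<alpha>)"
    unfolding Purc_def X_def[symmetric] sum_distrib_left[symmetric]
    by (subst (2) sum.swap, subst sum.swap, rule refl)
  finally show ?thesis unfolding A_def .
qed


lemma merge_split_bij:
  assumes "\<alpha> \<subseteq> U"
  shows "(\<Sum>x\<in>bits U. g x) = (\<Sum>(a,c)\<in>bits \<alpha> \<times> bits (U - \<alpha>). g (merge \<alpha> a c))"
proof (rule sum.reindex_bij_witness[where i="\<lambda>(a,c). merge \<alpha> a c" and j="\<lambda>x. (restrict x \<alpha>, restrict x (U - \<alpha>))"])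
  fix x assume x: "x \<in> bits U"
  show "(\<lambda>(a, c). merge \<alpha> a c) (restrict x \<alpha>, restrict x (U - \<alpha>)) = x"
    using x assms unfolding bits_def merge_def by (auto simp: PiE_iff extensional_def fun_eq_iff)
  thus "(\<lambda>(a, c). g (merge \<alpha> a c)) (restrict x \<alpha>, restrict x (U - \<alpha>)) = g x" by simp
  show "(restrict x \<alpha>, restrict x (U - \<alpha>)) \<in> bits \<alpha> \<times> bits (U - \<alpha>)"
    using x assms unfolding bits_def by (auto simp: PiE_iff)
next
  fix ac assume "ac \<in> bits \<alpha> \<times> bits (U - \<alpha>)"
  then obtain a c where ac: "ac = (a,c)" "a \<in> bits \<alpha>" "c \<in> bits (U - \<alpha>)" by auto
  show "(restrict ((\<lambda>(a, c). merge \<alpha> a c) ac) \<alpha>, restrict ((\<lambda>(a, c). merge \<alpha> a c) ac) (U - \<alpha>)) = ac"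
    using ac unfolding bits_def merge_def by (auto simp: PiE_iff extensional_def fun_eq_iff)
  show "(\<lambda>(a, c). merge \<alpha> a c) ac \<in> bits U"
    using ac assms unfolding bits_def merge_def by (auto simp: PiE_iff extensional_def)
qed

lemma prod_split_sum: "(\<Sum>p\<in>A \<times> C. case_prod f p) = (\<Sum>a\<in>A. \<Sum>c\<in>C. f a c)"
  by (rule sum.cartesian_product[symmetric])

lemma merge_merge: "merge \<alpha> (merge \<alpha> a b) (merge \<alpha> c d) = merge \<alpha> a d"
  unfolding merge_def by auto

lemma merge_empty: "merge {} a c = c"
  unfolding merge_def by auto

lemma purity_Purc:
  assumes "pure_state n \<psi>" "\<alpha> \<subseteq> {1..n}"
  shows "purity n \<psi> \<alpha> = Re (Purc n \<psi> \<alpha>)"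
proof (cases "\<alpha> = {}")
  case True
  have "Purc n \<psi> \<alpha> = (\<Sum>x\<in>bits {1..n}. \<psi> x * cnj (\<psi> x)) * (\<Sum>x\<in>bits {1..n}. \<psi> x * cnj (\<psi> x))"
    unfolding Purc_def True merge_empty sum_product by (simp add: mult_ac)
  thus ?thesis unfolding pure_sum[OF assms(1)] purity_def using True by simp
next
  case False
  define U where "U = {1..n::nat}"
  define A where "A = bits \<alpha>"
  define C where "C = bits (U - \<alpha>)"
  have "Purc n \<psi> \<alpha> = (\<Sum>(a,c)\<in>A \<times> C. \<Sum>(a',c')\<in>A \<times> C.
        \<psi> (merge \<alpha> a c) * \<psi> (merge \<alpha> a' c') * cnj (\<psi> (merge \<alpha> a' c)) * cnj (\<psi> (merge \<alpha> a c')))"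
    unfolding Purc_def merge_split_bij[OF assms(2)] merge_merge A_def C_def U_def ..
  also have "\<dots> = (\<Sum>a\<in>A. \<Sum>c\<in>C. \<Sum>a'\<in>A. \<Sum>c'\<in>C.
        \<psi> (merge \<alpha> a c) * \<psi> (merge \<alpha> a' c') * cnj (\<psi> (merge \<alpha> a' c)) * cnj (\<psi> (merge \<alpha> a c')))"
    unfolding prod_split_sum ..
  also have "\<dots> = (\<Sum>a\<in>A. \<Sum>a'\<in>A. \<Sum>c\<in>C. \<Sum>c'\<in>C.
        \<psi> (merge \<alpha> a c) * \<psi> (merge \<alpha> a' c') * cnj (\<psi> (merge \<alpha> a' c)) * cnj (\<psi> (merge \<alpha> a c')))"
    by (rule sum.cong[OF refl], rule sum.swap)
  also have "\<dots> = (\<Sum>a\<in>A. \<Sum>a'\<in>A. reduced n \<psi> \<alpha> a a' * reduced n \<psi> \<alpha> a' a)"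
    unfolding reduced_def C_def[unfolded U_def, symmetric] sum_product
    by (intro sum.cong refl) (simp add: mult_ac)
  finally show ?thesis unfolding purity_def A_def using False by simp
qed

lemma merge_same: "merge \<alpha> x x = x"
  unfolding merge_def by auto

lemma swap_sum:
  assumes "\<alpha> \<subseteq> U"
  shows "(\<Sum>x\<in>bits U. \<Sum>x'\<in>bits U. F (merge \<alpha> x' x) (merge \<alpha> x x')) = (\<Sum>x\<in>bits U. \<Sum>x'\<in>bits U. F x x')"
proof -
  have "(\<Sum>x\<in>bits U. \<Sum>x'\<in>bits U. F (merge \<alpha> x' x) (merge \<alpha> x x'))
      = (\<Sum>p\<in>bits U \<times> bits U. F (merge \<alpha> (snd p) (fst p)) (merge \<alpha> (fst p) (snd p)))"
    by (simp add: sum.cartesian_product case_prod_beta)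
  also have "\<dots> = (\<Sum>p\<in>bits U \<times> bits U. F (fst p) (snd p))"
    by (rule sum.reindex_bij_witness[where i="\<lambda>p. (merge \<alpha> (snd p) (fst p), merge \<alpha> (fst p) (snd p))"
          and j="\<lambda>p. (merge \<alpha> (snd p) (fst p), merge \<alpha> (fst p) (snd p))"])
       (use assms merge_bits in \<open>auto simp: merge_merge merge_same\<close>)
  also have "\<dots> = (\<Sum>x\<in>bits U. \<Sum>x'\<in>bits U. F x x')"
    by (simp add: sum.cartesian_product case_prod_beta)
  finally show ?thesis .
qed

lemma Purc_le:
  assumes "pure_state n \<psi>" "\<alpha> \<subseteq> {1..n}"
  shows "cmod (Purc n \<psi> \<alpha>) \<le> 1"
proof -
  define X where "X = bits {1..n::nat}"
  define N where "N x = (cmod (\<psi> x))\<^sup>2" for x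
  have amgm: "cmod (\<psi> x * \<psi> x' * cnj (\<psi> (merge \<alpha> x' x)) * cnj (\<psi> (merge \<alpha> x x')))
     \<le> (N x * N x' + N (merge \<alpha> x' x) * N (merge \<alpha> x x')) / 2" for x x'
  proof -
    define p where "p = cmod (\<psi> x) * cmod (\<psi> x')"
    define r where "r = cmod (\<psi> (merge \<alpha> x' x)) * cmod (\<psi> (merge \<alpha> x x'))"
    have "cmod (\<psi> x * \<psi> x' * cnj (\<psi> (merge \<alpha> x' x)) * cnj (\<psi> (merge \<alpha> x x'))) = p * r"
      unfolding p_def r_def by (simp add: norm_mult)
    also have "\<dots> \<le> (p\<^sup>2 + r\<^sup>2) / 2" using sum_squares_bound[of p r] by (simp add: power2_eq_square field_simps)
    also have "p\<^sup>2 = N x * N x'" unfolding p_def N_def by (simp add: power_mult_distrib)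
    also have "r\<^sup>2 = N (merge \<alpha> x' x) * N (merge \<alpha> x x')" unfolding r_def N_def by (simp add: power_mult_distrib)
    finally show ?thesis .
  qed
  have s1: "(\<Sum>x\<in>X. N x) = 1" using assms(1) unfolding pure_state_def N_def X_def .
  have "cmod (Purc n \<psi> \<alpha>) \<le> (\<Sum>x\<in>X. cmod (\<Sum>x'\<in>X. \<psi> x * \<psi> x' * cnj (\<psi> (merge \<alpha> x' x)) * cnj (\<psi> (merge \<alpha> x x'))))"
    unfolding Purc_def X_def[symmetric] by (rule norm_sum)
  also have "\<dots> \<le> (\<Sum>x\<in>X. \<Sum>x'\<in>X. cmod (\<psi> x * \<psi> x' * cnj (\<psi> (merge \<alpha> x' x)) * cnj (\<psi> (merge \<alpha> x x'))))"
    by (intro sum_mono norm_sum)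
  also have "\<dots> \<le> (\<Sum>x\<in>X. \<Sum>x'\<in>X. (N x * N x' + N (merge \<alpha> x' x) * N (merge \<alpha> x x')) / 2)"
    by (intro sum_mono amgm)
  also have "\<dots> = ((\<Sum>x\<in>X. \<Sum>x'\<in>X. N x * N x') + (\<Sum>x\<in>X. \<Sum>x'\<in>X. N (merge \<alpha> x' x) * N (merge \<alpha> x x'))) / 2"
    by (simp only: sum.distrib sum_divide_distrib[symmetric] add_divide_distrib)
  also have "(\<Sum>x\<in>X. \<Sum>x'\<in>X. N (merge \<alpha> x' x) * N (merge \<alpha> x x')) = (\<Sum>x\<in>X. \<Sum>x'\<in>X. N x * N x')"
    unfolding X_def by (rule swap_sum[OF assms(2)])
  also have "(\<Sum>x\<in>X. \<Sum>x'\<in>X. N x * N x') = 1"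
    unfolding sum_product[symmetric] s1 by simp
  finally show ?thesis by simp
qed

lemma Re_ofreal_mult: "Re (complex_of_real r * z) = r * Re z"
  by simp

lemma quantum_summary:
  assumes "pure_state n \<psi>" "sic \<phi>" "S \<subseteq> {1..n}"
  shows "(\<forall>q\<in>S \<rightarrow>\<^sub>E {1..4}. 0 \<le> sic_prob n \<psi> \<phi> S q)"
    "(\<forall>q\<in>S \<rightarrow>\<^sub>E {1..4}. sic_prob n \<psi> \<phi> S q \<le> (1/2) ^ card S)"
    "(\<Sum>q\<in>S \<rightarrow>\<^sub>E {1..4}. sic_prob n \<psi> \<phi> S q) = 1"
    "conc_ent n \<psi> S = 1 - 3 ^ card S * (\<Sum>q\<in>S \<rightarrow>\<^sub>E {1..4}. (sic_prob n \<psi> \<phi> S q)\<^sup>2)"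
    "(\<Sum>q\<in>S \<rightarrow>\<^sub>E {1..4}. (sic_prob n \<psi> \<phi> S q)\<^sup>2) \<le> (1/3) ^ card S"
proof -
  define A where "A = S \<rightarrow>\<^sub>E {1..4::nat}"
  have fS: "finite S" using assms(3) finite_subset by blast
  show "\<forall>q\<in>S \<rightarrow>\<^sub>E {1..4}. 0 \<le> sic_prob n \<psi> \<phi> S q" using sic_prob_nonneg[OF assms(3)] by blast
  show "\<forall>q\<in>S \<rightarrow>\<^sub>E {1..4}. sic_prob n \<psi> \<phi> S q \<le> (1/2) ^ card S" using sic_prob_le[OF assms] by blast
  show "(\<Sum>q\<in>S \<rightarrow>\<^sub>E {1..4}. sic_prob n \<psi> \<phi> S q) = 1"
    unfolding sic_prob_Pc Re_sum[symmetric] Pc_sum[OF assms] by simp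
  have "complex_of_real (\<Sum>q\<in>A. (sic_prob n \<psi> \<phi> S q)\<^sup>2) = (\<Sum>q\<in>A. (Pc n \<psi> \<phi> S q)\<^sup>2)"
    unfolding of_real_sum of_real_power Pc_of_real[OF assms(3)] ..
  also have "\<dots> = (1/6) ^ card S * (\<Sum>\<alpha>\<in>Pow S. Purc n \<psi> \<alpha>)"
    unfolding A_def by (rule Pc_sq_sum[OF assms(2,3)])
  finally have "(\<Sum>q\<in>A. (sic_prob n \<psi> \<phi> S q)\<^sup>2) = Re ((1/6) ^ card S * (\<Sum>\<alpha>\<in>Pow S. Purc n \<psi> \<alpha>))"
    by (metis Re_complex_of_real)
  also have "\<dots> = (1/6) ^ card S * (\<Sum>\<alpha>\<in>Pow S. Re (Purc n \<psi> \<alpha>))"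
  proof -
    have "(1/6::complex) ^ card S = complex_of_real ((1/6) ^ card S)" by simp
    thus ?thesis by (simp only: Re_ofreal_mult Re_sum)
  qed
  also have "(\<Sum>\<alpha>\<in>Pow S. Re (Purc n \<psi> \<alpha>)) = (\<Sum>\<alpha>\<in>Pow S. purity n \<psi> \<alpha>)"
    using assms(3) by (intro sum.cong refl purity_Purc[OF assms(1), symmetric]) auto
  finally have SQ: "(\<Sum>q\<in>A. (sic_prob n \<psi> \<phi> S q)\<^sup>2) = (1/6) ^ card S * (\<Sum>\<alpha>\<in>Pow S. purity n \<psi> \<alpha>)" .
  have "3 ^ card S * (\<Sum>q\<in>A. (sic_prob n \<psi> \<phi> S q)\<^sup>2) = (3 * (1/6)) ^ card S * (\<Sum>\<alpha>\<in>Pow S. purity n \<psi> \<alpha>)"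
    unfolding SQ power_mult_distrib by simp
  also have "(3 * (1/6::real)) = 1/2" by simp
  finally show "conc_ent n \<psi> S = 1 - 3 ^ card S * (\<Sum>q\<in>S \<rightarrow>\<^sub>E {1..4}. (sic_prob n \<psi> \<phi> S q)\<^sup>2)"
    unfolding conc_ent_def A_def by (simp add: power_one_over)
  have "(\<Sum>\<alpha>\<in>Pow S. purity n \<psi> \<alpha>) \<le> (\<Sum>\<alpha>\<in>Pow S. 1)"
  proof (rule sum_mono)
    fix \<alpha> assume "\<alpha> \<in> Pow S"
    hence a: "\<alpha> \<subseteq> {1..n}" using assms(3) by auto
    have "purity n \<psi> \<alpha> = Re (Purc n \<psi> \<alpha>)" by (rule purity_Purc[OF assms(1) a])
    also have "\<dots> \<le> cmod (Purc n \<psi> \<alpha>)" by (rule complex_Re_le_cmod)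
    also have "\<dots> \<le> 1" by (rule Purc_le[OF assms(1) a])
    finally show "purity n \<psi> \<alpha> \<le> 1" .
  qed
  also have "\<dots> = 2 ^ card S" using fS by (simp add: card_Pow)
  finally have "(\<Sum>q\<in>A. (sic_prob n \<psi> \<phi> S q)\<^sup>2) \<le> (1/6) ^ card S * 2 ^ card S"
    unfolding SQ by (intro mult_left_mono) auto
  also have "\<dots> = (1/3) ^ card S" unfolding power_mult_distrib[symmetric] by simp
  finally show "(\<Sum>q\<in>S \<rightarrow>\<^sub>E {1..4}. (sic_prob n \<psi> \<phi> S q)\<^sup>2) \<le> (1/3) ^ card S" unfolding A_def .
qed


lemma prod_if_neutral:
  assumes "finite I" "J \<subseteq> I"
  shows "(\<Prod>i\<in>I. if i \<in> J then f i else 1) = (\<Prod>i\<in>J. f i)"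
proof -
  have "(\<Prod>i\<in>I. if i \<in> J then f i else 1) = (\<Prod>i\<in>I \<inter> {i. i \<in> J}. f i) * (\<Prod>i\<in>I \<inter> - {i. i \<in> J}. 1)"
    by (rule prod.If_cases[OF assms(1)])
  also have "I \<inter> {i. i \<in> J} = J" using assms(2) by auto
  finally show ?thesis by simp
qed

lemma ind_sum:
  assumes "finite A" "a0 \<in> A"
  shows "(\<Sum>a\<in>A. if a0 = a \<and> R then 1 else (0::'b::comm_semiring_1)) = (if R then 1 else 0)"
proof -
  have "(\<Sum>a\<in>A. if a0 = a \<and> R then 1 else (0::'b)) = (\<Sum>a\<in>A. if a0 = a then (if R then 1 else 0) else 0)"
    by (intro sum.cong refl) auto
  also have "\<dots> = (if R then 1 else 0)" using assms by simp
  finally show ?thesis .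
qed

locale fprob =
  fixes A :: "'a set" and P :: "'a \<Rightarrow> real"
  assumes finA: "finite A" and Pnn: "\<And>a. a \<in> A \<Longrightarrow> 0 \<le> P a" and Psum: "(\<Sum>a\<in>A. P a) = 1"
begin

definition W :: "nat set \<Rightarrow> (nat \<Rightarrow> 'a) \<Rightarrow> real" where "W I Q = (\<Prod>k\<in>I. P (Q k))"
definition p2 where "p2 = (\<Sum>a\<in>A. P a * P a)"
definition p3 where "p3 = (\<Sum>a\<in>A. P a * P a * P a)"

lemma W_nonneg: "Q \<in> PiE I (\<lambda>_. A) \<Longrightarrow> 0 \<le> W I Q"
  unfolding W_def by (intro prod_nonneg) (auto intro: Pnn)

lemma E_gen:
  assumes "finite I" "J \<subseteq> I"
  shows "(\<Sum>Q\<in>PiE I (\<lambda>_. A). W I Q * (\<Prod>k\<in>J. f k (Q k))) = (\<Prod>k\<in>J. \<Sum>a\<in>A. P a * f k a)"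
proof -
  have "(\<Sum>Q\<in>PiE I (\<lambda>_. A). W I Q * (\<Prod>k\<in>J. f k (Q k)))
      = (\<Sum>Q\<in>PiE I (\<lambda>_. A). \<Prod>k\<in>I. P (Q k) * (if k \<in> J then f k (Q k) else 1))"
    unfolding W_def prod.distrib prod_if_neutral[OF assms] ..
  also have "\<dots> = (\<Prod>k\<in>I. \<Sum>a\<in>A. P a * (if k \<in> J then f k a else 1))"
    by (rule prod_sum_PiE[symmetric]) (auto simp: assms finA)
  also have "\<dots> = (\<Prod>k\<in>I. if k \<in> J then (\<Sum>a\<in>A. P a * f k a) else 1)"
    by (intro prod.cong refl) (auto simp: Psum)
  also have "\<dots> = (\<Prod>k\<in>J. \<Sum>a\<in>A. P a * f k a)" by (rule prod_if_neutral[OF assms])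
  finally show ?thesis .
qed

lemma E_one:
  assumes "finite I"
  shows "(\<Sum>Q\<in>PiE I (\<lambda>_. A). W I Q) = 1"
  using E_gen[OF assms, of "{}"] by simp

lemma E_ind:
  assumes "finite I" "J \<subseteq> I" "\<forall>k\<in>J. a k \<in> A"
  shows "(\<Sum>Q\<in>PiE I (\<lambda>_. A). W I Q * (\<Prod>k\<in>J. if Q k = a k then 1 else 0)) = (\<Prod>k\<in>J. P (a k))"
  unfolding E_gen[OF assms(1,2), of "\<lambda>k b. if b = a k then 1 else 0", simplified]
proof (intro prod.cong refl)
  fix k assume "k \<in> J"
  hence "a k \<in> A" using assms(3) by blast
  thus "(\<Sum>b\<in>A. P b * (if b = a k then 1 else 0)) = P (a k)"
    using finA by (simp add: if_distrib cong: if_cong)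
qed

lemma E_lin:
  assumes "finite B"
  shows "(\<Sum>Q\<in>PiE I (\<lambda>_. A). W I Q * (\<Sum>b\<in>B. g b Q)) = (\<Sum>b\<in>B. \<Sum>Q\<in>PiE I (\<lambda>_. A). W I Q * g b Q)"
  unfolding sum_distrib_left by (rule sum.swap)

lemma E_pair:
  assumes "finite I" "k \<in> I" "k' \<in> I" "k \<noteq> k'"
  shows "(\<Sum>Q\<in>PiE I (\<lambda>_. A). W I Q * (if Q k = Q k' then 1 else 0)) = p2"
proof -
  have d: "(if Q k = Q k' then 1 else 0) = (\<Sum>a\<in>A. \<Prod>i\<in>{k,k'}. if Q i = a then 1 else (0::real))"
    if "Q \<in> PiE I (\<lambda>_. A)" for Q
  proof -
    have "Q k \<in> A" using that assms(2) by auto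
    hence "(\<Sum>a\<in>A. if Q k = a \<and> Q k' = Q k then 1 else (0::real)) = (if Q k' = Q k then 1 else 0)"
      by (intro ind_sum finA)
    moreover have "(\<Prod>i\<in>{k,k'}. if Q i = a then 1 else (0::real)) = (if Q k = a \<and> Q k' = Q k then 1 else 0)" for a
      using assms(4) by auto
    ultimately show ?thesis by auto
  qed
  have "(\<Sum>Q\<in>PiE I (\<lambda>_. A). W I Q * (if Q k = Q k' then 1 else 0))
      = (\<Sum>Q\<in>PiE I (\<lambda>_. A). W I Q * (\<Sum>a\<in>A. \<Prod>i\<in>{k,k'}. if Q i = a then 1 else (0::real)))"
    using d by (intro sum.cong refl) auto
  also have "\<dots> = (\<Sum>a\<in>A. \<Prod>i\<in>{k,k'}. P a)"
    unfolding E_lin[OF finA] using assms by (intro sum.cong refl E_ind) auto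
  also have "\<dots> = p2" unfolding p2_def using assms(4) by simp
  finally show ?thesis .
qed

lemma E_triple:
  assumes "finite I" "c \<in> I" "u \<in> I" "v \<in> I" "c \<noteq> u" "c \<noteq> v" "u \<noteq> v"
  shows "(\<Sum>Q\<in>PiE I (\<lambda>_. A). W I Q * ((if Q c = Q u then 1 else 0) * (if Q c = Q v then 1 else 0))) = p3"
proof -
  have d: "(if Q c = Q u then 1 else 0) * (if Q c = Q v then 1 else 0) = (\<Sum>a\<in>A. \<Prod>i\<in>{c,u,v}. if Q i = a then 1 else (0::real))"
    if "Q \<in> PiE I (\<lambda>_. A)" for Q
  proof -
    have "Q c \<in> A" using that assms(2) by auto
    hence "(\<Sum>a\<in>A. if Q c = a \<and> (Q u = Q c \<and> Q v = Q c) then 1 else (0::real)) = (if Q u = Q c \<and> Q v = Q c then 1 else 0)"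
      by (intro ind_sum finA)
    moreover have "(\<Prod>i\<in>{c,u,v}. if Q i = a then 1 else (0::real)) = (if Q c = a \<and> (Q u = Q c \<and> Q v = Q c) then 1 else 0)" for a
      using assms(5-7) by auto
    ultimately show ?thesis by auto
  qed
  have "(\<Sum>Q\<in>PiE I (\<lambda>_. A). W I Q * ((if Q c = Q u then 1 else 0) * (if Q c = Q v then 1 else 0)))
      = (\<Sum>Q\<in>PiE I (\<lambda>_. A). W I Q * (\<Sum>a\<in>A. \<Prod>i\<in>{c,u,v}. if Q i = a then 1 else (0::real)))"
    using d by (intro sum.cong refl) auto
  also have "\<dots> = (\<Sum>a\<in>A. \<Prod>i\<in>{c,u,v}. P a)"
    unfolding E_lin[OF finA] using assms by (intro sum.cong refl E_ind) auto
  also have "\<dots> = p3" unfolding p3_def using assms(5-7) by (simp add: mult_ac)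
  finally show ?thesis .
qed

lemma E_quad:
  assumes "finite I" "k \<in> I" "k' \<in> I" "l \<in> I" "l' \<in> I" "k \<noteq> k'" "l \<noteq> l'"
    "k \<noteq> l" "k \<noteq> l'" "k' \<noteq> l" "k' \<noteq> l'"
  shows "(\<Sum>Q\<in>PiE I (\<lambda>_. A). W I Q * ((if Q k = Q k' then 1 else 0) * (if Q l = Q l' then 1 else 0))) = p2 * p2"
proof -
  define J where "J = {k,k',l,l'}"
  have d: "(if Q k = Q k' then 1 else 0) * (if Q l = Q l' then 1 else 0) =
     (\<Sum>a\<in>A. \<Sum>b\<in>A. \<Prod>i\<in>J. if Q i = (if i = k \<or> i = k' then a else b) then 1 else (0::real))"
    if "Q \<in> PiE I (\<lambda>_. A)" for Q
  proof -
    have "Q k \<in> A" "Q l \<in> A" using that assms(2,4) by auto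
    have s1: "(\<Sum>b\<in>A. if Q l = b \<and> Q l' = Q l then 1 else (0::real)) = (if Q l' = Q l then 1 else 0)"
      using \<open>Q l \<in> A\<close> by (intro ind_sum finA)
    have s2: "(\<Sum>a\<in>A. if Q k = a \<and> Q k' = Q k then 1 else (0::real)) = (if Q k' = Q k then 1 else 0)"
      using \<open>Q k \<in> A\<close> by (intro ind_sum finA)
    have p: "(\<Prod>i\<in>J. if Q i = (if i = k \<or> i = k' then a else b) then 1 else (0::real))
       = (if Q k = a \<and> Q k' = Q k then 1 else 0) * (if Q l = b \<and> Q l' = Q l then 1 else 0)" for a b
      using assms(6-11) unfolding J_def by auto
    show ?thesis unfolding p sum_product[symmetric] s1 s2 by auto
  qed
  have "(\<Sum>Q\<in>PiE I (\<lambda>_. A). W I Q * ((if Q k = Q k' then 1 else 0) * (if Q l = Q l' then 1 else 0)))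
      = (\<Sum>Q\<in>PiE I (\<lambda>_. A). W I Q * (\<Sum>a\<in>A. \<Sum>b\<in>A. \<Prod>i\<in>J. if Q i = (if i = k \<or> i = k' then a else b) then 1 else (0::real)))"
    using d by (intro sum.cong refl) auto
  also have "\<dots> = (\<Sum>a\<in>A. \<Sum>b\<in>A. \<Prod>i\<in>J. P (if i = k \<or> i = k' then a else b))"
    unfolding E_lin[OF finA] using assms unfolding J_def by (intro sum.cong refl E_ind) auto
  also have "\<dots> = (\<Sum>a\<in>A. \<Sum>b\<in>A. (P a * P a) * (P b * P b))"
    unfolding J_def using assms(6-11) by (intro sum.cong refl) (simp add: mult_ac)
  also have "\<dots> = p2 * p2" unfolding p2_def sum_product ..
  finally show ?thesis .
qed

end


context fprob begin

definition EE :: "nat set \<Rightarrow> ((nat \<Rightarrow> 'a) \<Rightarrow> real) \<Rightarrow> real" where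
  "EE I f = (\<Sum>Q\<in>PiE I (\<lambda>_. A). W I Q * f Q)"

lemma EE_add: "EE I (\<lambda>Q. f Q + g Q) = EE I f + EE I g"
  unfolding EE_def by (simp add: distrib_left sum.distrib)
lemma EE_diff: "EE I (\<lambda>Q. f Q - g Q) = EE I f - EE I g"
  unfolding EE_def by (simp add: right_diff_distrib sum_subtractf)
lemma EE_cmult: "EE I (\<lambda>Q. c * f Q) = c * EE I f"
  unfolding EE_def by (simp add: sum_distrib_left mult_ac)
lemma EE_const: "finite I \<Longrightarrow> EE I (\<lambda>Q. c) = c"
  unfolding EE_def using E_one by (simp flip: sum_distrib_right)
lemma EE_cong: "(\<And>Q. Q \<in> PiE I (\<lambda>_. A) \<Longrightarrow> f Q = g Q) \<Longrightarrow> EE I f = EE I g"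
  unfolding EE_def by (intro sum.cong refl) auto
lemma EE_mono: "(\<And>Q. Q \<in> PiE I (\<lambda>_. A) \<Longrightarrow> f Q \<le> g Q) \<Longrightarrow> EE I f \<le> EE I g"
  unfolding EE_def by (intro sum_mono mult_left_mono W_nonneg) auto
lemma EE_sum: "finite B \<Longrightarrow> EE I (\<lambda>Q. \<Sum>b\<in>B. g b Q) = (\<Sum>b\<in>B. EE I (g b))"
  unfolding EE_def by (rule E_lin)

lemma p2_nonneg: "0 \<le> p2" unfolding p2_def using Pnn by (simp add: sum_nonneg)
lemma p3_nonneg: "0 \<le> p3" unfolding p3_def using Pnn by (simp add: sum_nonneg)

abbreviation (input) ind :: "bool \<Rightarrow> real" where "ind b \<equiv> (if b then 1 else 0)"

lemma EII_bound:
  assumes "finite B" "k \<in> B" "k' \<in> B" "l \<in> B" "l' \<in> B" "k \<noteq> k'" "l \<noteq> l'"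
  shows "EE B (\<lambda>Q. ind (Q k = Q k') * ind (Q l = Q l')) - p2 * p2
     \<le> p3 * (ind (l = k) + ind (l = k') + ind (l' = k) + ind (l' = k')) + p2 * (ind (l = k \<and> l' = k') + ind (l = k' \<and> l' = k))"
proof -
  have p2: "0 \<le> p2" by (rule p2_nonneg)
  have p3: "0 \<le> p3" by (rule p3_nonneg)
  have pp: "0 \<le> p2 * p2" using p2 by simp
  consider "l = k \<and> l' = k'" | "l = k' \<and> l' = k" | "l = k \<and> l' \<noteq> k'" | "l = k' \<and> l' \<noteq> k"
    | "l' = k \<and> l \<noteq> k'" | "l' = k' \<and> l \<noteq> k" | "l \<noteq> k \<and> l \<noteq> k' \<and> l' \<noteq> k \<and> l' \<noteq> k'"
    by blast
  thus ?thesis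
  proof cases
    case 1
    have "EE B (\<lambda>Q. ind (Q k = Q k') * ind (Q l = Q l')) = EE B (\<lambda>Q. ind (Q k = Q k'))"
      using 1 by (intro EE_cong) auto
    also have "\<dots> = p2" unfolding EE_def by (rule E_pair[OF assms(1,2,3,6)])
    finally have e: "EE B (\<lambda>Q. ind (Q k = Q k') * ind (Q l = Q l')) = p2" .
    have r: "p3 * (ind (l = k) + ind (l = k') + ind (l' = k) + ind (l' = k')) + p2 * (ind (l = k \<and> l' = k') + ind (l = k' \<and> l' = k)) \<ge> p2"
      using 1 assms(6,7) p2 p3 by auto
    show ?thesis unfolding e using r pp p2 p3 by linarith
  next
    case 2
    have "EE B (\<lambda>Q. ind (Q k = Q k') * ind (Q l = Q l')) = EE B (\<lambda>Q. ind (Q k = Q k'))"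
      using 2 by (intro EE_cong) auto
    also have "\<dots> = p2" unfolding EE_def by (rule E_pair[OF assms(1,2,3,6)])
    finally have e: "EE B (\<lambda>Q. ind (Q k = Q k') * ind (Q l = Q l')) = p2" .
    have r: "p3 * (ind (l = k) + ind (l = k') + ind (l' = k) + ind (l' = k')) + p2 * (ind (l = k \<and> l' = k') + ind (l = k' \<and> l' = k)) \<ge> p2"
      using 2 assms(6,7) p2 p3 by auto
    show ?thesis unfolding e using r pp p2 p3 by linarith
  next
    case 3
    hence "l' \<noteq> k" using assms(7) by auto
    have "EE B (\<lambda>Q. ind (Q k = Q k') * ind (Q l = Q l')) = EE B (\<lambda>Q. ind (Q k = Q k') * ind (Q k = Q l'))"
      using 3 by (intro EE_cong) auto
    also have "\<dots> = p3" unfolding EE_def using 3 \<open>l' \<noteq> k\<close> assms by (intro E_triple) auto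
    finally have e: "EE B (\<lambda>Q. ind (Q k = Q k') * ind (Q l = Q l')) = p3" .
    have r: "p3 * (ind (l = k) + ind (l = k') + ind (l' = k) + ind (l' = k')) + p2 * (ind (l = k \<and> l' = k') + ind (l = k' \<and> l' = k)) \<ge> p3"
      using 3 \<open>l' \<noteq> k\<close> assms(6,7) p2 p3 by auto
    show ?thesis unfolding e using r pp p2 p3 by linarith
  next
    case 4
    hence "l' \<noteq> k'" using assms(7) by auto
    have "EE B (\<lambda>Q. ind (Q k = Q k') * ind (Q l = Q l')) = EE B (\<lambda>Q. ind (Q k' = Q k) * ind (Q k' = Q l'))"
      using 4 by (intro EE_cong) auto
    also have "\<dots> = p3" unfolding EE_def using 4 \<open>l' \<noteq> k'\<close> assms by (intro E_triple) auto
    finally have e: "EE B (\<lambda>Q. ind (Q k = Q k') * ind (Q l = Q l')) = p3" .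
    have r: "p3 * (ind (l = k) + ind (l = k') + ind (l' = k) + ind (l' = k')) + p2 * (ind (l = k \<and> l' = k') + ind (l = k' \<and> l' = k)) \<ge> p3"
      using 4 \<open>l' \<noteq> k'\<close> assms(6,7) p2 p3 by auto
    show ?thesis unfolding e using r pp p2 p3 by linarith
  next
    case 5
    hence "l \<noteq> k" using assms(7) by auto
    have "EE B (\<lambda>Q. ind (Q k = Q k') * ind (Q l = Q l')) = EE B (\<lambda>Q. ind (Q k = Q k') * ind (Q k = Q l))"
      using 5 by (intro EE_cong) auto
    also have "\<dots> = p3" unfolding EE_def using 5 \<open>l \<noteq> k\<close> assms by (intro E_triple) auto
    finally have e: "EE B (\<lambda>Q. ind (Q k = Q k') * ind (Q l = Q l')) = p3" .
    have r: "p3 * (ind (l = k) + ind (l = k') + ind (l' = k) + ind (l' = k')) + p2 * (ind (l = k \<and> l' = k') + ind (l = k' \<and> l' = k)) \<ge> p3"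
      using 5 \<open>l \<noteq> k\<close> assms(6,7) p2 p3 by auto
    show ?thesis unfolding e using r pp p2 p3 by linarith
  next
    case 6
    hence "l \<noteq> k'" using assms(7) by auto
    have "EE B (\<lambda>Q. ind (Q k = Q k') * ind (Q l = Q l')) = EE B (\<lambda>Q. ind (Q k' = Q k) * ind (Q k' = Q l))"
      using 6 by (intro EE_cong) auto
    also have "\<dots> = p3" unfolding EE_def using 6 \<open>l \<noteq> k'\<close> assms by (intro E_triple) auto
    finally have e: "EE B (\<lambda>Q. ind (Q k = Q k') * ind (Q l = Q l')) = p3" .
    have r: "p3 * (ind (l = k) + ind (l = k') + ind (l' = k) + ind (l' = k')) + p2 * (ind (l = k \<and> l' = k') + ind (l = k' \<and> l' = k)) \<ge> p3"
      using 6 \<open>l \<noteq> k'\<close> assms(6,7) p2 p3 by auto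
    show ?thesis unfolding e using r pp p2 p3 by linarith
  next
    case 7
    have "EE B (\<lambda>Q. ind (Q k = Q k') * ind (Q l = Q l')) = p2 * p2"
      unfolding EE_def using 7 assms by (intro E_quad) auto
    moreover have r: "p3 * (ind (l = k) + ind (l = k') + ind (l' = k) + ind (l' = k')) + p2 * (ind (l = k \<and> l' = k') + ind (l = k' \<and> l' = k)) \<ge> 0"
      using 7 by auto
    ultimately show ?thesis by linarith
  qed
qed


lemma count_offdiag:
  assumes "finite B"
  shows "(\<Sum>k\<in>B. \<Sum>k'\<in>B. if k \<noteq> k' then 1 else (0::real)) = real (card B) * (real (card B) - 1)"
proof -
  have "(\<Sum>k\<in>B. \<Sum>k'\<in>B. if k \<noteq> k' then 1 else (0::real)) = (\<Sum>k\<in>B. real (card B) - 1)"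
  proof (intro sum.cong refl)
    fix k assume k: "k \<in> B"
    have "(\<Sum>k'\<in>B. if k \<noteq> k' then 1 else (0::real)) = (\<Sum>k'\<in>B. 1 - (if k = k' then 1 else 0))"
      by (intro sum.cong refl) auto
    also have "\<dots> = real (card B) - 1" using assms k by (simp add: sum_subtractf)
    finally show "(\<Sum>k'\<in>B. if k \<noteq> k' then 1 else (0::real)) = real (card B) - 1" .
  qed
  thus ?thesis by simp
qed

lemma count_l:
  assumes "finite B" "k \<in> B"
  shows "(\<Sum>l\<in>B. \<Sum>l'\<in>B. if l \<noteq> l' then ind (l = k) else 0) = real (card B) - 1"
proof -
  have "(\<Sum>l\<in>B. \<Sum>l'\<in>B. if l \<noteq> l' then ind (l = k) else 0) = (\<Sum>l\<in>B. if l = k then (\<Sum>l'\<in>B. if k \<noteq> l' then 1 else 0) else 0)"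
    by (intro sum.cong refl) auto
  also have "\<dots> = (\<Sum>l'\<in>B. if k \<noteq> l' then 1 else 0)" using assms by simp
  also have "\<dots> = (\<Sum>l'\<in>B. 1 - (if k = l' then 1 else 0))" by (intro sum.cong refl) auto
  also have "\<dots> = real (card B) - 1" using assms by (simp add: sum_subtractf)
  finally show ?thesis .
qed

lemma count_l':
  assumes "finite B" "k \<in> B"
  shows "(\<Sum>l\<in>B. \<Sum>l'\<in>B. if l \<noteq> l' then ind (l' = k) else 0) = real (card B) - 1"
proof -
  have "(\<Sum>l\<in>B. \<Sum>l'\<in>B. if l \<noteq> l' then ind (l' = k) else 0) = (\<Sum>l'\<in>B. \<Sum>l\<in>B. if l' \<noteq> l then ind (l' = k) else 0)"
    by (subst sum.swap) (intro sum.cong refl, auto)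
  also have "\<dots> = real (card B) - 1" by (rule count_l[OF assms])
  finally show ?thesis .
qed

lemma count_pair:
  assumes "finite B" "k \<in> B" "k' \<in> B"
  shows "(\<Sum>l\<in>B. \<Sum>l'\<in>B. if l \<noteq> l' then ind (l = k \<and> l' = k') else 0) = ind (k \<noteq> k')"
proof -
  have "(\<Sum>l\<in>B. \<Sum>l'\<in>B. if l \<noteq> l' then ind (l = k \<and> l' = k') else 0)
      = (\<Sum>l\<in>B. if l = k then (\<Sum>l'\<in>B. if l' = k' then ind (k \<noteq> k') else 0) else 0)"
  proof (intro sum.cong refl)
    fix l assume "l \<in> B"
    show "(\<Sum>l'\<in>B. if l \<noteq> l' then ind (l = k \<and> l' = k') else 0) = (if l = k then (\<Sum>l'\<in>B. if l' = k' then ind (k \<noteq> k') else 0) else 0)"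
      by (cases "l = k") (auto intro!: sum.neutral sum.cong)
  qed
  also have "\<dots> = ind (k \<noteq> k')" using assms by simp
  finally show ?thesis .
qed


lemma split_if_lin:
  "(if c then p3 * (a1 + a2 + a3 + a4) + p2 * (b1 + b2) else (0::real)) =
    p3 * ((if c then a1 else 0) + (if c then a2 else 0) + (if c then a3 else 0) + (if c then a4 else 0))
    + p2 * ((if c then b1 else 0) + (if c then b2 else 0))"
  by simp

lemma var_bound:
  assumes fB: "finite B" and K: "card B = K" and K2: "K \<ge> 2"
  shows "EE B (\<lambda>Q. ((1 / (real K * (real K - 1))) *
            (\<Sum>k\<in>B. \<Sum>k'\<in>B. if k \<noteq> k' \<and> Q k = Q k' then 1 else 0) - p2)\<^sup>2)
     \<le> (4 * (real K - 1) * p3 + 2 * p2) / (real K * (real K - 1))"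
proof -
  define N where "N = real K * (real K - 1)"
  have Npos: "N > 0" unfolding N_def using K2 by simp
  define C where "C = 4 * (real K - 1) * p3 + 2 * p2"
  define d where "d k k' Q = (if k \<noteq> k' then ind (Q k = Q k') - p2 else 0)" for k k' and Q :: "nat \<Rightarrow> 'a"
  define D where "D Q = (\<Sum>k\<in>B. \<Sum>k'\<in>B. d k k' Q)" for Q
  have cnt: "(\<Sum>k\<in>B. \<Sum>k'\<in>B. if k \<noteq> k' then 1 else (0::real)) = N"
    unfolding N_def K[symmetric] by (rule count_offdiag[OF fB])
  have shat: "(1 / N) * (\<Sum>k\<in>B. \<Sum>k'\<in>B. if k \<noteq> k' \<and> Q k = Q k' then 1 else 0) - p2 = D Q / N" for Q
  proof -
    have "(\<Sum>k\<in>B. \<Sum>k'\<in>B. if k \<noteq> k' \<and> Q k = Q k' then 1 else (0::real))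
        = (\<Sum>k\<in>B. \<Sum>k'\<in>B. d k k' Q + p2 * (if k \<noteq> k' then 1 else 0))"
      unfolding d_def by (intro sum.cong refl) auto
    also have "\<dots> = D Q + p2 * N"
      unfolding D_def sum.distrib sum_distrib_left[symmetric] cnt ..
    finally show ?thesis using Npos by (simp add: field_simps)
  qed
  have ED: "EE B (\<lambda>Q. (D Q)\<^sup>2) \<le> N * C"
  proof -
    have "EE B (\<lambda>Q. (D Q)\<^sup>2) = EE B (\<lambda>Q. \<Sum>k\<in>B. \<Sum>l\<in>B. \<Sum>k'\<in>B. \<Sum>l'\<in>B. d k k' Q * d l l' Q)"
      unfolding D_def power2_eq_square sum_product ..
    also have "\<dots> = EE B (\<lambda>Q. \<Sum>k\<in>B. \<Sum>k'\<in>B. \<Sum>l\<in>B. \<Sum>l'\<in>B. d k k' Q * d l l' Q)"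
      by (rule arg_cong[where f="EE B"], rule ext, rule sum.cong[OF refl], rule sum.swap)
    also have "\<dots> = (\<Sum>k\<in>B. \<Sum>k'\<in>B. \<Sum>l\<in>B. \<Sum>l'\<in>B. EE B (\<lambda>Q. d k k' Q * d l l' Q))"
      by (simp only: EE_sum[OF fB])
    also have "\<dots> \<le> (\<Sum>k\<in>B. \<Sum>k'\<in>B. if k \<noteq> k' then C else 0)"
    proof (intro sum_mono)
      fix k k' assume k: "k \<in> B" and k': "k' \<in> B"
      show "(\<Sum>l\<in>B. \<Sum>l'\<in>B. EE B (\<lambda>Q. d k k' Q * d l l' Q)) \<le> (if k \<noteq> k' then C else 0)"
      proof (cases "k = k'")
        case True
        thus ?thesis unfolding d_def using EE_const[OF fB, of 0] by simp
      next
        case False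
        have "(\<Sum>l\<in>B. \<Sum>l'\<in>B. EE B (\<lambda>Q. d k k' Q * d l l' Q))
          \<le> (\<Sum>l\<in>B. \<Sum>l'\<in>B. if l \<noteq> l' then
               p3 * (ind (l = k) + ind (l = k') + ind (l' = k) + ind (l' = k')) + p2 * (ind (l = k \<and> l' = k') + ind (l = k' \<and> l' = k))
             else 0)"
        proof (intro sum_mono)
          fix l l' assume l: "l \<in> B" and l': "l' \<in> B"
          show "EE B (\<lambda>Q. d k k' Q * d l l' Q) \<le> (if l \<noteq> l' then
               p3 * (ind (l = k) + ind (l = k') + ind (l' = k) + ind (l' = k')) + p2 * (ind (l = k \<and> l' = k') + ind (l = k' \<and> l' = k))
             else 0)"
          proof (cases "l = l'")
            case True
            thus ?thesis unfolding d_def using EE_const[OF fB, of 0] by simp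
          next
            case False
            have e1: "EE B (\<lambda>Q. ind (Q k = Q k')) = p2" unfolding EE_def by (rule E_pair[OF fB k k' \<open>k \<noteq> k'\<close>])
            have e2: "EE B (\<lambda>Q. ind (Q l = Q l')) = p2" unfolding EE_def by (rule E_pair[OF fB l l' False])
            have "EE B (\<lambda>Q. d k k' Q * d l l' Q) =
                EE B (\<lambda>Q. ind (Q k = Q k') * ind (Q l = Q l') - (p2 * ind (Q k = Q k') + (p2 * ind (Q l = Q l') - p2 * p2)))"
              unfolding d_def using \<open>k \<noteq> k'\<close> False by (intro EE_cong) (simp add: algebra_simps)
            also have "\<dots> = EE B (\<lambda>Q. ind (Q k = Q k') * ind (Q l = Q l')) - p2 * p2"
              unfolding EE_diff EE_add EE_cmult EE_const[OF fB] e1 e2 by simp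
            also have "\<dots> \<le> p3 * (ind (l = k) + ind (l = k') + ind (l' = k) + ind (l' = k')) + p2 * (ind (l = k \<and> l' = k') + ind (l = k' \<and> l' = k))"
              by (rule EII_bound[OF fB k k' l l' \<open>k \<noteq> k'\<close> False])
            finally show ?thesis using False by simp
          qed
        qed
        also have "\<dots> = p3 * ((\<Sum>l\<in>B. \<Sum>l'\<in>B. if l \<noteq> l' then ind (l = k) else 0) + (\<Sum>l\<in>B. \<Sum>l'\<in>B. if l \<noteq> l' then ind (l = k') else 0)
              + (\<Sum>l\<in>B. \<Sum>l'\<in>B. if l \<noteq> l' then ind (l' = k) else 0) + (\<Sum>l\<in>B. \<Sum>l'\<in>B. if l \<noteq> l' then ind (l' = k') else 0))
            + p2 * ((\<Sum>l\<in>B. \<Sum>l'\<in>B. if l \<noteq> l' then ind (l = k \<and> l' = k') else 0) + (\<Sum>l\<in>B. \<Sum>l'\<in>B. if l \<noteq> l' then ind (l = k' \<and> l' = k) else 0))"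
          unfolding split_if_lin by (simp only: sum.distrib flip: sum_distrib_left)
        also have "\<dots> = C"
          unfolding count_l[OF fB k] count_l[OF fB k'] count_l'[OF fB k] count_l'[OF fB k']
            count_pair[OF fB k k'] count_pair[OF fB k' k] C_def K using False by simp
        finally show ?thesis using False by simp
      qed
    qed
    also have "\<dots> = C * N"
      unfolding cnt[symmetric] sum_distrib_left by (intro sum.cong refl) auto
    finally show ?thesis by (simp add: mult.commute)
  qed
  have "EE B (\<lambda>Q. ((1 / (real K * (real K - 1))) *
            (\<Sum>k\<in>B. \<Sum>k'\<in>B. if k \<noteq> k' \<and> Q k = Q k' then 1 else 0) - p2)\<^sup>2) = EE B (\<lambda>Q. (D Q)\<^sup>2) / (N * N)"
    unfolding N_def[symmetric] shat by (simp add: EE_cmult[of B "1/(N*N)", simplified] power_divide power2_eq_square)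
  also have "\<dots> \<le> N * C / (N * N)" using ED Npos by (intro divide_right_mono) auto
  also have "\<dots> = C / N" using Npos by simp
  finally show ?thesis unfolding C_def N_def .
qed

end


context fprob begin

lemma EE_split:
  assumes fI: "finite I" and fJ: "finite J" and dis: "I \<inter> J = {}"
    and f: "\<And>Q. f Q = f (restrict Q I)" and g: "\<And>Q. g Q = g (restrict Q J)"
  shows "EE (I \<union> J) (\<lambda>Q. f Q * g Q) = EE I f * EE J g"
proof -
  have "EE (I \<union> J) (\<lambda>Q. f Q * g Q) = (\<Sum>Q\<in>PiE (I \<union> J) (\<lambda>_. A). (W I (restrict Q I) * f (restrict Q I)) * (W J (restrict Q J) * g (restrict Q J)))"
    unfolding EE_def
  proof (intro sum.cong refl)
    fix Q assume "Q \<in> PiE (I \<union> J) (\<lambda>_. A)"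
    have "W (I \<union> J) Q = W I Q * W J Q" unfolding W_def by (rule prod.union_disjoint[OF fI fJ dis])
    moreover have "W I Q = W I (restrict Q I)" "W J Q = W J (restrict Q J)" unfolding W_def by auto
    ultimately show "W (I \<union> J) Q * (f Q * g Q) = W I (restrict Q I) * f (restrict Q I) * (W J (restrict Q J) * g (restrict Q J))"
      using f[of Q] g[of Q] by (simp add: mult_ac)
  qed
  also have "\<dots> = (\<Sum>(u,v)\<in>PiE I (\<lambda>_. A) \<times> PiE J (\<lambda>_. A). (W I u * f u) * (W J v * g v))"
  proof (rule sum.reindex_bij_witness[where i="\<lambda>(u,v). (\<lambda>i. if i \<in> I then u i else v i)" and j="\<lambda>Q. (restrict Q I, restrict Q J)"])
    fix Q assume Q: "Q \<in> PiE (I \<union> J) (\<lambda>_. A)"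
    show "(\<lambda>(u, v) i. if i \<in> I then u i else v i) (restrict Q I, restrict Q J) = Q"
      using Q by (auto simp: fun_eq_iff PiE_iff extensional_def)
    show "(restrict Q I, restrict Q J) \<in> PiE I (\<lambda>_. A) \<times> PiE J (\<lambda>_. A)" using Q by auto
    show "(\<lambda>(u, v). W I u * f u * (W J v * g v)) (restrict Q I, restrict Q J) = W I (restrict Q I) * f (restrict Q I) * (W J (restrict Q J) * g (restrict Q J))"
      by simp
  next
    fix uv assume uv: "uv \<in> PiE I (\<lambda>_. A) \<times> PiE J (\<lambda>_. A)"
    then obtain u v where uv': "uv = (u,v)" "u \<in> PiE I (\<lambda>_. A)" "v \<in> PiE J (\<lambda>_. A)" by auto
    show "(restrict ((\<lambda>(u, v) i. if i \<in> I then u i else v i) uv) I, restrict ((\<lambda>(u, v) i. if i \<in> I then u i else v i) uv) J) = uv"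
      using uv' dis by (auto simp: fun_eq_iff PiE_iff extensional_def)
    show "(\<lambda>(u, v) i. if i \<in> I then u i else v i) uv \<in> PiE (I \<union> J) (\<lambda>_. A)"
      using uv' by (auto simp: PiE_iff extensional_def)
  qed
  also have "\<dots> = EE I f * EE J g"
    unfolding EE_def sum_product sum.cartesian_product ..
  finally show ?thesis .
qed


lemma EE_blocks:
  assumes g: "\<And>b Q. g b Q = g b (restrict Q {(b - 1) * K + 1 .. b * K})"
  shows "EE {1..m * K} (\<lambda>Q. \<Prod>b\<in>{1..m}. g b Q) = (\<Prod>b\<in>{1..m}. EE {(b - 1) * K + 1 .. b * K} (g b))"
proof (induction m)
  case 0
  show ?case using EE_const[of "{}" 1] by simp
next
  case (Suc m)
  define U where "U = {1..m * K}"
  define V where "V = {m * K + 1 .. Suc m * K}"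
  have UV: "{1..Suc m * K} = U \<union> V" unfolding U_def V_def by auto
  have dis: "U \<inter> V = {}" unfolding U_def V_def by auto
  have Vb: "{(Suc m - 1) * K + 1 .. Suc m * K} = V" unfolding V_def by simp
  have f: "(\<Prod>b\<in>{1..m}. g b Q) = (\<Prod>b\<in>{1..m}. g b (restrict Q U))" for Q
  proof (intro prod.cong refl)
    fix b assume b: "b \<in> {1..m}"
    have sub: "{(b - 1) * K + 1 .. b * K} \<subseteq> U" unfolding U_def using b
      by (auto simp: mult_le_mono1)
    have "g b Q = g b (restrict Q {(b - 1) * K + 1 .. b * K})" by (rule g)
    also have "restrict Q {(b - 1) * K + 1 .. b * K} = restrict (restrict Q U) {(b - 1) * K + 1 .. b * K}"
      using sub by (auto simp: fun_eq_iff)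
    also have "g b \<dots> = g b (restrict Q U)" by (rule g[symmetric])
    finally show "g b Q = g b (restrict Q U)" .
  qed
  have "EE {1..Suc m * K} (\<lambda>Q. \<Prod>b\<in>{1..Suc m}. g b Q) = EE (U \<union> V) (\<lambda>Q. (\<Prod>b\<in>{1..m}. g b Q) * g (Suc m) Q)"
    unfolding UV by (simp add: prod.cl_ivl_Suc mult.commute)
  also have "\<dots> = EE U (\<lambda>Q. \<Prod>b\<in>{1..m}. g b Q) * EE V (g (Suc m))"
  proof (rule EE_split)
    show "finite U" "finite V" unfolding U_def V_def by auto
    show "U \<inter> V = {}" by (rule dis)
    show "(\<Prod>b\<in>{1..m}. g b Q) = (\<Prod>b\<in>{1..m}. g b (restrict Q U))" for Q by (rule f)
    show "g (Suc m) Q = g (Suc m) (restrict Q V)" for Q using g[of "Suc m" Q] Vb by simp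
  qed
  also have "\<dots> = (\<Prod>b\<in>{1..Suc m}. EE {(b - 1) * K + 1 .. b * K} (g b))"
    using Suc.IH Vb unfolding U_def by (simp add: prod.cl_ivl_Suc mult.commute)
  finally show ?case .
qed


lemma cheb_ind:
  assumes "\<epsilon> > 0"
  shows "ind (\<epsilon> \<le> \<bar>x\<bar>) \<le> x\<^sup>2 / \<epsilon>\<^sup>2"
proof (cases "\<epsilon> \<le> \<bar>x\<bar>")
  case True
  hence "\<epsilon>\<^sup>2 \<le> x\<^sup>2" using assms by (metis abs_ge_zero abs_of_pos power2_abs power_mono)
  thus ?thesis using True assms by simp
qed (simp)

lemma block_fail:
  assumes fB: "finite B" and K: "card B = K" and K2: "K \<ge> 2" and eps: "\<epsilon> > 0"
    and hp2: "p2 \<le> (1/3) ^ s" and hp3: "p3 \<le> (1/2) ^ s * p2"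
    and hK: "16 * (real K - 1) * (3/2) ^ s + 8 * 3 ^ s \<le> \<epsilon>\<^sup>2 * (real K * (real K - 1))"
  shows "EE B (\<lambda>Q. ind (\<epsilon> \<le> \<bar>(1 - 3 ^ s * ((1 / (real K * (real K - 1))) *
            (\<Sum>k\<in>B. \<Sum>k'\<in>B. if k \<noteq> k' \<and> Q k = Q k' then 1 else 0))) - (1 - 3 ^ s * p2)\<bar>)) \<le> 1/4"
proof -
  define Sh where "Sh (Q::nat \<Rightarrow> 'a) = (1 / (real K * (real K - 1))) * (\<Sum>k\<in>B. \<Sum>k'\<in>B. if k \<noteq> k' \<and> Q k = Q k' then 1 else 0)" for Q
  define T :: real where "T = 3 ^ s"
  define N where "N = real K * (real K - 1)"
  have Npos: "N > 0" unfolding N_def using K2 by simp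
  have "EE B (\<lambda>Q. ind (\<epsilon> \<le> \<bar>(1 - T * Sh Q) - (1 - T * p2)\<bar>)) \<le> EE B (\<lambda>Q. (T\<^sup>2 / \<epsilon>\<^sup>2) * (Sh Q - p2)\<^sup>2)"
  proof (rule EE_mono)
    fix Q
    have "(1 - T * Sh Q) - (1 - T * p2) = - (T * (Sh Q - p2))" by (simp add: algebra_simps)
    hence "((1 - T * Sh Q) - (1 - T * p2))\<^sup>2 = T\<^sup>2 * (Sh Q - p2)\<^sup>2" by (simp add: power_mult_distrib)
    thus "ind (\<epsilon> \<le> \<bar>(1 - T * Sh Q) - (1 - T * p2)\<bar>) \<le> (T\<^sup>2 / \<epsilon>\<^sup>2) * (Sh Q - p2)\<^sup>2"
      using cheb_ind[OF eps, of "(1 - T * Sh Q) - (1 - T * p2)"] by simp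
  qed
  also have "\<dots> = (T\<^sup>2 / \<epsilon>\<^sup>2) * EE B (\<lambda>Q. (Sh Q - p2)\<^sup>2)" by (rule EE_cmult)
  also have "\<dots> \<le> (T\<^sup>2 / \<epsilon>\<^sup>2) * ((4 * (real K - 1) * p3 + 2 * p2) / N)"
    using var_bound[OF fB K K2] unfolding Sh_def N_def by (intro mult_left_mono) auto
  also have "\<dots> = (4 * (real K - 1) * (T\<^sup>2 * p3) + 2 * (T\<^sup>2 * p2)) / (\<epsilon>\<^sup>2 * N)"
    by (simp add: field_simps)
  also have "\<dots> \<le> (4 * (real K - 1) * (3/2) ^ s + 2 * 3 ^ s) / (\<epsilon>\<^sup>2 * N)"
  proof (rule divide_right_mono)
    have T2p2: "T\<^sup>2 * p2 \<le> 3 ^ s"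
    proof -
      have "T\<^sup>2 * p2 \<le> T\<^sup>2 * (1/3) ^ s" using hp2 by (intro mult_left_mono) auto
      also have "\<dots> = 3 ^ s" unfolding T_def power2_eq_square power_mult_distrib[symmetric] by simp
      finally show ?thesis .
    qed
    have T2p3: "T\<^sup>2 * p3 \<le> (3/2) ^ s"
    proof -
      have "T\<^sup>2 * p3 \<le> T\<^sup>2 * ((1/2) ^ s * (1/3) ^ s)"
        using hp3 hp2 by (intro mult_left_mono) (auto intro: order_trans mult_left_mono)
      also have "\<dots> = (3/2) ^ s" unfolding T_def power2_eq_square power_mult_distrib[symmetric] mult.assoc by simp
      finally show ?thesis .
    qed
    have "real K - 1 \<ge> 0" using K2 by simp
    thus "4 * (real K - 1) * (T\<^sup>2 * p3) + 2 * (T\<^sup>2 * p2) \<le> 4 * (real K - 1) * (3/2) ^ s + 2 * 3 ^ s"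
      using T2p2 T2p3 by (intro add_mono mult_left_mono) auto
    show "0 \<le> \<epsilon>\<^sup>2 * N" using Npos by simp
  qed
  also have "\<dots> \<le> 1/4"
  proof -
    have d: "\<epsilon>\<^sup>2 * N > 0" using Npos eps by simp
    have "4 * (4 * (real K - 1) * (3/2) ^ s + 2 * 3 ^ s) \<le> \<epsilon>\<^sup>2 * N" using hK unfolding N_def by (simp add: algebra_simps)
    thus ?thesis by (simp add: pos_divide_le_eq[OF d])
  qed
  finally show ?thesis unfolding Sh_def T_def .
qed

end


lemma count_ge:
  assumes "J \<subseteq> {..<length ys}" "\<forall>j\<in>J. P (ys ! j)"
  shows "card J \<le> length (filter P ys)"
proof -
  have "J \<subseteq> {j. j < length ys \<and> P (ys ! j)}" using assms by auto
  hence "card J \<le> card {j. j < length ys \<and> P (ys ! j)}" by (intro card_mono) auto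
  thus ?thesis by (simp add: length_filter_conv_card)
qed

lemma avg_aux:
  fixes a b t :: real
  assumes "a \<le> b"
  shows "t \<le> (a + b) / 2 \<Longrightarrow> t \<le> b" "(a + b) / 2 \<le> t \<Longrightarrow> a \<le> t"
  using assms by (simp_all add: field_simps)

lemma median_bad:
  fixes xs :: "real list"
  assumes N: "length xs = N" "N \<ge> 1" and eps: "\<epsilon> \<le> \<bar>median xs - c\<bar>"
  shows "N \<le> 2 * length (filter (\<lambda>x. \<epsilon> \<le> \<bar>x - c\<bar>) xs)"
proof -
  define ys where "ys = sort xs"
  define h where "h = N div 2"
  define P where "P x = (\<epsilon> \<le> \<bar>x - c\<bar>)" for x :: real
  have ly: "length ys = N" unfolding ys_def using N by simp
  have so: "sorted ys" unfolding ys_def by simp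
  have mono: "i \<le> j \<Longrightarrow> j < N \<Longrightarrow> ys ! i \<le> ys ! j" for i j using so ly by (simp add: sorted_nth_mono)
  have cnt: "length (filter P ys) = length (filter P xs)"
    unfolding ys_def by (simp add: filter_sort)
  have up: "N - h \<le> length (filter P ys)" if "c + \<epsilon> \<le> ys ! h" "h < N"
  proof -
    have "card {h..<N} \<le> length (filter P ys)"
    proof (rule count_ge)
      show "{h..<N} \<subseteq> {..<length ys}" using ly by auto
      show "\<forall>j\<in>{h..<N}. P (ys ! j)" using that mono unfolding P_def
        by (metis (no_types, lifting) abs_ge_self add.commute atLeastLessThan_iff diff_ge_0_iff_ge le_diff_eq order.trans)
    qed
    thus ?thesis by simp
  qed
  have down: "Suc m \<le> length (filter P ys)" if "ys ! m \<le> c - \<epsilon>" "m < N" for m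
  proof -
    have "card {0..<Suc m} \<le> length (filter P ys)"
    proof (rule count_ge)
      show "{0..<Suc m} \<subseteq> {..<length ys}" using ly that by auto
      show "\<forall>j\<in>{0..<Suc m}. P (ys ! j)" using that mono unfolding P_def
        by (smt (verit, ccfv_SIG) atLeastLessThan_iff less_Suc_eq_le)
    qed
    thus ?thesis by simp
  qed
  have "length (filter P ys) * 2 \<ge> N"
  proof (cases "odd N")
    case True
    hence med: "median xs = ys ! h" unfolding median_def ys_def h_def Let_def using N by simp
    have hN: "h < N" "N = 2 * h + 1" unfolding h_def using True N by auto
    from eps med consider "c + \<epsilon> \<le> ys ! h" | "ys ! h \<le> c - \<epsilon>" by linarith
    thus ?thesis
    proof cases
      case 1 thus ?thesis using up[OF 1 hN(1)] hN by linarith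
    next
      case 2 thus ?thesis using down[OF 2 hN(1)] hN by linarith
    qed
  next
    case False
    hence med: "median xs = (ys ! (h - 1) + ys ! h) / 2" unfolding median_def ys_def h_def Let_def using N by simp
    have hN: "h < N" "N = 2 * h" "h \<ge> 1" "h - 1 < N" unfolding h_def using False N by auto
    have le: "ys ! (h - 1) \<le> ys ! h" using mono hN by simp
    have "c + \<epsilon> \<le> median xs \<or> median xs \<le> c - \<epsilon>" using eps by (auto simp: abs_if split: if_splits)
    hence "c + \<epsilon> \<le> ys ! h \<or> ys ! (h - 1) \<le> c - \<epsilon>"
    proof (elim disjE)
      assume "c + \<epsilon> \<le> median xs" thus ?thesis using avg_aux(1)[OF le] med by simp
    next
      assume "median xs \<le> c - \<epsilon>" thus ?thesis using avg_aux(2)[OF le] med by simp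
    qed
    then consider "c + \<epsilon> \<le> ys ! h" | "ys ! (h - 1) \<le> c - \<epsilon>" by blast
    thus ?thesis
    proof cases
      case 1 thus ?thesis using up[OF 1 hN(1)] hN by linarith
    next
      case 2 thus ?thesis using down[OF 2 hN(4)] hN by linarith
    qed
  qed
  thus ?thesis using cnt unfolding P_def by simp
qed


lemma NB_ge1:
  assumes "0 < \<delta>" "\<delta> < 1"
  shows "N_B \<delta> \<ge> 1" "8 * ln (1 / \<delta>) \<le> real (N_B \<delta>)"
proof -
  have "ln (1 / \<delta>) > 0" using assms by simp
  hence p: "8 * ln (1 / \<delta>) > 0" by simp
  show "N_B \<delta> \<ge> 1" unfolding N_B_def using p by (simp add: le_nat_iff)
  have c0: "0 \<le> \<lceil>8 * ln (1 / \<delta>)\<rceil>" using p by simp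
  have "real (N_B \<delta>) = real_of_int \<lceil>8 * ln (1 / \<delta>)\<rceil>" unfolding N_B_def using c0 by simp
  thus "8 * ln (1 / \<delta>) \<le> real (N_B \<delta>)" by (simp add: le_of_int_ceiling)
qed

lemma K_props:
  assumes eps: "\<epsilon> > 0"
  shows "K_opt \<epsilon> s \<ge> 2"
    "16 * (real (K_opt \<epsilon> s) - 1) * (3/2) ^ s + 8 * 3 ^ s \<le> \<epsilon>\<^sup>2 * (real (K_opt \<epsilon> s) * (real (K_opt \<epsilon> s) - 1))"
proof -
  define a :: real where "a = (16 / \<epsilon>\<^sup>2) * (3/2) ^ s"
  define y :: real where "y = 8 * 3 ^ s / \<epsilon>\<^sup>2"
  define r where "r = (1/2) * (a + 1) + (1/2) * sqrt ((a - 1)\<^sup>2 + 4 * y)"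
  have e2: "\<epsilon>\<^sup>2 > 0" using eps by simp
  have ypos: "y > 0" unfolding y_def using e2 by simp
  have apos: "a > 0" unfolding a_def using e2 by simp
  have r_eq: "r = (1/2) * ((16 / \<epsilon>\<^sup>2) * (3/2) ^ s + 1)
      + (1/2) * sqrt (((16 / \<epsilon>\<^sup>2) * (3/2) ^ s - 1)\<^sup>2 + (32 / \<epsilon>\<^sup>2) * 3 ^ s)"
    unfolding r_def a_def y_def by simp
  have Kdef: "K_opt \<epsilon> s = nat \<lceil>r\<rceil>" unfolding K_opt_def r_eq ..
  have "sqrt ((a - 1)\<^sup>2) < sqrt ((a - 1)\<^sup>2 + 4 * y)" using ypos by (intro real_sqrt_less_mono) simp
  hence sq: "sqrt ((a - 1)\<^sup>2 + 4 * y) > \<bar>a - 1\<bar>" by simp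
  have r1: "r > 1"
  proof -
    define S where "S = sqrt ((a - 1)\<^sup>2 + 4 * y)"
    have "S > 1 - a" using sq abs_ge_minus_self[of "a - 1"] unfolding S_def by linarith
    thus ?thesis unfolding r_def S_def[symmetric] by (simp add: field_simps)
  qed
  have "r \<le> real_of_int \<lceil>r\<rceil>" by (rule le_of_int_ceiling)
  hence "real_of_int \<lceil>r\<rceil> > 1" using r1 by linarith
  hence "\<lceil>r\<rceil> > 1" by simp
  hence "\<lceil>r\<rceil> \<ge> 2" by simp
  thus K2: "K_opt \<epsilon> s \<ge> 2" unfolding Kdef by linarith
  define K where "K = real (K_opt \<epsilon> s)"
  have Kr: "K \<ge> r"
  proof -
    have "\<lceil>r\<rceil> \<ge> 0" using r1 by simp
    hence "K = real_of_int \<lceil>r\<rceil>" unfolding K_def Kdef by simp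
    thus ?thesis by (simp add: le_of_int_ceiling)
  qed
  have "2 * K - a - 1 \<ge> sqrt ((a - 1)\<^sup>2 + 4 * y)" using Kr unfolding r_def by (simp add: field_simps)
  moreover have nn: "0 \<le> (a - 1)\<^sup>2 + 4 * y" using ypos by (intro add_nonneg_nonneg) auto
  hence "sqrt ((a - 1)\<^sup>2 + 4 * y) \<ge> 0" by simp
  ultimately have "(2 * K - a - 1)\<^sup>2 \<ge> (sqrt ((a - 1)\<^sup>2 + 4 * y))\<^sup>2"
    by (intro power_mono) auto
  also have "(sqrt ((a - 1)\<^sup>2 + 4 * y))\<^sup>2 = (a - 1)\<^sup>2 + 4 * y" using nn by simp
  finally have "K * (K - 1) \<ge> a * (K - 1) + y" by (simp add: power2_eq_square algebra_simps)
  hence "\<epsilon>\<^sup>2 * (K * (K - 1)) \<ge> \<epsilon>\<^sup>2 * (a * (K - 1) + y)" using e2 by (intro mult_left_mono) auto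
  also have "\<epsilon>\<^sup>2 * (a * (K - 1) + y) = 16 * (K - 1) * (3/2) ^ s + 8 * 3 ^ s"
    unfolding a_def y_def using e2 by (simp add: field_simps)
  finally show "16 * (real (K_opt \<epsilon> s) - 1) * (3/2) ^ s + 8 * 3 ^ s \<le> \<epsilon>\<^sup>2 * (real (K_opt \<epsilon> s) * (real (K_opt \<epsilon> s) - 1))"
    unfolding K_def .
qed

lemma final_num:
  assumes "0 < \<delta>" "\<delta> < 1"
  shows "(3/2) ^ N_B \<delta> / sqrt 3 ^ N_B \<delta> \<le> \<delta>"
proof -
  define N where "N = N_B \<delta>"
  have "(3/2) ^ N / sqrt 3 ^ N = (sqrt 3 / 2) ^ N"
  proof -
    have eq: "(3/2::real) / sqrt 3 = sqrt 3 / 2"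
    proof -
      have "sqrt 3 * sqrt 3 = (3::real)" by simp
      thus ?thesis by (simp add: field_simps)
    qed
    have "(3/2::real) ^ N / sqrt 3 ^ N = ((3/2) / sqrt 3) ^ N" by (simp only: power_divide)
    thus ?thesis unfolding eq .
  qed
  also have "\<dots> \<le> exp (-1/8) ^ N"
  proof (rule power_mono)
    have "sqrt 3 \<le> sqrt ((7/4)\<^sup>2)" by (rule real_sqrt_le_mono) (simp add: power2_eq_square)
    hence "sqrt 3 \<le> 7/4" by simp
    hence "sqrt 3 / 2 \<le> 7/8" by simp
    also have "(7/8::real) \<le> exp (-1/8)" using exp_ge_add_one_self[of "-1/8"] by simp
    finally show "sqrt 3 / 2 \<le> exp (-1/8)" .
  qed simp
  also have "\<dots> = exp (- (real N / 8))" by (simp add: exp_of_nat_mult[symmetric])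
  also have "\<dots> \<le> exp (- ln (1 / \<delta>))" using NB_ge1(2)[OF assms] unfolding N_def by simp
  also have "\<dots> = \<delta>" using assms by (simp add: ln_div)
  finally show ?thesis unfolding N_def .
qed


lemma length_filter_upt:
  "length (filter P [1..<N + 1]) = card {b\<in>{1..N}. P b}"
proof -
  have "length (filter P [1..<N + 1]) = card (set (filter P [1..<N + 1]))"
    by (rule distinct_card[symmetric]) simp
  also have "set (filter P [1..<N + 1]) = {b\<in>{1..N}. P b}" by auto
  finally show ?thesis .
qed

lemma prod_3_card:
  assumes "finite B"
  shows "(\<Prod>b\<in>B. 1 + 2 * (if F b then 1 else 0)) = (3::real) ^ card {b\<in>B. F b}"
proof -
  have "(\<Prod>b\<in>B. 1 + 2 * (if F b then 1 else 0)) = (\<Prod>b\<in>B. if F b then 3 else (1::real))"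
    by (intro prod.cong refl) auto
  also have "\<dots> = (\<Prod>b\<in>B \<inter> {b. F b}. 3) * (\<Prod>b\<in>B \<inter> - {b. F b}. 1)"
    by (rule prod.If_cases[OF assms])
  also have "B \<inter> {b. F b} = {b\<in>B. F b}" by auto
  finally show ?thesis by simp
qed

lemma CE_local:
  "CE_est s K Q b = CE_est s K (restrict Q {(b - 1) * K + 1 .. b * K}) b"
  unfolding CE_est_def S_hat_def by (intro arg_cong[where f="\<lambda>x. 1 - 3 ^ s * ((1 / (real K * (real K - 1))) * x)"] sum.cong refl) auto

lemma main_bound:
  fixes n :: nat and \<psi> :: "(nat \<Rightarrow> nat) \<Rightarrow> complex" and \<phi> :: "nat \<Rightarrow> nat \<Rightarrow> complex"
    and S :: "nat set" and \<epsilon> \<delta> :: real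
  assumes psi: "pure_state n \<psi>" and phi: "sic \<phi>" and SU: "S \<subseteq> {1..n}" and "S \<noteq> {}"
    and eps: "\<epsilon> > 0" and d0: "0 < \<delta>" and d1: "\<delta> < 1"
    and NB: "NB = N_B \<delta>" and K: "K = K_opt \<epsilon> (card S)" and M: "M = NB * K"
  shows "(\<Sum>Q\<in>{Q \<in> {1..M} \<rightarrow>\<^sub>E (S \<rightarrow>\<^sub>E {1..4}).
             \<bar>median (map (CE_est (card S) K Q) [1..<NB + 1]) - conc_ent n \<psi> S\<bar> \<ge> \<epsilon>}.
        \<Prod>k\<in>{1..M}. sic_prob n \<psi> \<phi> S (Q k)) \<le> \<delta>"
proof -
  define s where "s = card S"
  define A where "A = S \<rightarrow>\<^sub>E {1..4::nat}"
  define P where "P = sic_prob n \<psi> \<phi> S"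
  define C where "C = conc_ent n \<psi> S"
  have fS: "finite S" using SU finite_subset by blast
  note QS = quantum_summary[OF psi phi SU]
  interpret fprob A P
  proof
    show "finite A" unfolding A_def using fS by (simp add: finite_PiE)
    show "\<And>a. a \<in> A \<Longrightarrow> 0 \<le> P a" using QS(1) unfolding A_def P_def by blast
    show "(\<Sum>a\<in>A. P a) = 1" using QS(3) unfolding A_def P_def .
  qed
  have p2eq: "p2 = (\<Sum>a\<in>A. (P a)\<^sup>2)" unfolding p2_def power2_eq_square ..
  have Ceq: "C = 1 - 3 ^ s * p2" unfolding C_def p2eq unfolding s_def A_def P_def by (rule QS(4))
  have hp2: "p2 \<le> (1/3) ^ s" unfolding p2eq unfolding s_def A_def P_def by (rule QS(5))
  have hp3: "p3 \<le> (1/2) ^ s * p2"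
  proof -
    have "p3 \<le> (\<Sum>a\<in>A. P a * P a * (1/2) ^ s)" unfolding p3_def
    proof (rule sum_mono)
      fix a assume "a \<in> A"
      hence "P a \<le> (1/2) ^ s" "0 \<le> P a" using QS(2) Pnn unfolding A_def P_def s_def by auto
      thus "P a * P a * P a \<le> P a * P a * (1/2) ^ s" by (intro mult_left_mono) auto
    qed
    thus ?thesis unfolding p2_def sum_distrib_left by (simp add: mult_ac)
  qed
  have NB1: "NB \<ge> 1" unfolding NB using NB_ge1[OF d0 d1] by simp
  have K2: "K \<ge> 2" unfolding K using K_props[OF eps] by simp
  have hK: "16 * (real K - 1) * (3/2) ^ s + 8 * 3 ^ s \<le> \<epsilon>\<^sup>2 * (real K * (real K - 1))"
    unfolding K s_def using K_props[OF eps] by simp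
  define fail where "fail b Q = (\<epsilon> \<le> \<bar>CE_est s K Q b - C\<bar>)" for b Q
  define g where "g b Q = 1 + 2 * (if fail b Q then 1 else (0::real))" for b Q
  have gloc: "g b Q = g b (restrict Q {(b - 1) * K + 1 .. b * K})" for b Q
    unfolding g_def fail_def using CE_local by metis
  have Eg: "EE {(b - 1) * K + 1 .. b * K} (g b) \<le> 3/2" if b: "b \<in> {1..NB}" for b
  proof -
    have cardB: "card {(b - 1) * K + 1 .. b * K} = K" using b
      by (simp add: diff_mult_distrib)
    have "EE {(b - 1) * K + 1 .. b * K} (\<lambda>Q. if fail b Q then 1 else 0) \<le> 1/4"
      unfolding fail_def CE_est_def S_hat_def Ceq
      by (rule block_fail[OF _ cardB K2 eps hp2 hp3 hK]) simp
    thus ?thesis unfolding g_def EE_add EE_cmult EE_const[OF finite_atLeastAtMost] by simp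
  qed
  have Eg0: "0 \<le> EE {(b - 1) * K + 1 .. b * K} (g b)" for b
    unfolding EE_def g_def by (intro sum_nonneg mult_nonneg_nonneg W_nonneg) auto
  have s3: "sqrt 3 ^ NB > 0" by simp
  have ptw: "(if \<epsilon> \<le> \<bar>median (map (CE_est s K Q) [1..<NB + 1]) - C\<bar> then 1 else 0)
      \<le> (\<Prod>b\<in>{1..NB}. g b Q) / sqrt 3 ^ NB" for Q
  proof -
    define F where "F = card {b\<in>{1..NB}. fail b Q}"
    have prodF: "(\<Prod>b\<in>{1..NB}. g b Q) = 3 ^ F" unfolding g_def F_def by (rule prod_3_card) simp
    show ?thesis
    proof (cases "\<epsilon> \<le> \<bar>median (map (CE_est s K Q) [1..<NB + 1]) - C\<bar>")
      case True
      have "NB \<le> 2 * length (filter (\<lambda>x. \<epsilon> \<le> \<bar>x - C\<bar>) (map (CE_est s K Q) [1..<NB + 1]))"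
        by (rule median_bad[OF _ NB1 True]) simp
      also have "length (filter (\<lambda>x. \<epsilon> \<le> \<bar>x - C\<bar>) (map (CE_est s K Q) [1..<NB + 1])) = F"
        unfolding filter_map length_map length_filter_upt F_def fail_def by (simp add: o_def)
      finally have NF: "NB \<le> 2 * F" .
      have "sqrt 3 ^ NB \<le> sqrt 3 ^ (2 * F)" by (rule power_increasing[OF NF]) simp
      also have "\<dots> = 3 ^ F" by (simp add: power_mult)
      finally show ?thesis using True prodF s3 by simp
    qed (use prodF s3 in simp)
  qed
  have "(\<Sum>Q\<in>{Q \<in> {1..M} \<rightarrow>\<^sub>E A. \<epsilon> \<le> \<bar>median (map (CE_est s K Q) [1..<NB + 1]) - C\<bar>}. \<Prod>k\<in>{1..M}. P (Q k))
      = EE {1..M} (\<lambda>Q. if \<epsilon> \<le> \<bar>median (map (CE_est s K Q) [1..<NB + 1]) - C\<bar> then 1 else 0)"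
    unfolding EE_def W_def
    by (subst sum.inter_filter) (auto simp: finite_PiE finA intro!: sum.cong)
  also have "\<dots> \<le> EE {1..M} (\<lambda>Q. (1 / sqrt 3 ^ NB) * (\<Prod>b\<in>{1..NB}. g b Q))"
    by (rule EE_mono) (use ptw in simp)
  also have "\<dots> = (1 / sqrt 3 ^ NB) * EE {1..NB * K} (\<lambda>Q. \<Prod>b\<in>{1..NB}. g b Q)"
    unfolding EE_cmult M ..
  also have "EE {1..NB * K} (\<lambda>Q. \<Prod>b\<in>{1..NB}. g b Q) = (\<Prod>b\<in>{1..NB}. EE {(b - 1) * K + 1 .. b * K} (g b))"
    by (rule EE_blocks[where g=g and K=K, OF gloc])
  also have "(\<Prod>b\<in>{1..NB}. EE {(b - 1) * K + 1 .. b * K} (g b)) \<le> (\<Prod>b\<in>{1..NB}. 3/2)"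
    by (intro prod_mono) (use Eg Eg0 in auto)
  hence "(1 / sqrt 3 ^ NB) * (\<Prod>b\<in>{1..NB}. EE {(b - 1) * K + 1 .. b * K} (g b)) \<le> (1 / sqrt 3 ^ NB) * (\<Prod>b\<in>{1..NB}. (3/2::real))"
    by (intro mult_left_mono) auto
  also have "(1 / sqrt 3 ^ NB) * (\<Prod>b\<in>{1..NB}. (3/2::real)) = (3/2) ^ N_B \<delta> / sqrt 3 ^ N_B \<delta>"
    unfolding NB by simp
  also have "\<dots> \<le> \<delta>" by (rule final_num[OF d0 d1])
  finally have fin: "(\<Sum>Q\<in>{Q \<in> {1..M} \<rightarrow>\<^sub>E A. \<epsilon> \<le> \<bar>median (map (CE_est s K Q) [1..<NB + 1]) - C\<bar>}. \<Prod>k\<in>{1..M}. P (Q k)) \<le> \<delta>" .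
  thus ?thesis unfolding A_def P_def C_def s_def .
qed

theorem theorem6:
  fixes n :: nat and \<psi> :: "(nat \<Rightarrow> nat) \<Rightarrow> complex" and \<phi> :: "nat \<Rightarrow> nat \<Rightarrow> complex"
    and S :: "nat set" and \<epsilon> \<delta> :: real
  assumes "pure_state n \<psi>"
    and "sic \<phi>"
    and "S \<subseteq> {1..n}" and "S \<noteq> {}"
    and "\<epsilon> > 0" and "0 < \<delta>" and "\<delta> < 1"
  shows "(let NB = N_B \<delta>; K = K_opt \<epsilon> (card S); M = NB * K in
     (\<Sum>Q\<in>{Q \<in> {1..M} \<rightarrow>\<^sub>E (S \<rightarrow>\<^sub>E {1..4}).
             \<bar>median (map (CE_est (card S) K Q) [1..<NB + 1]) - conc_ent n \<psi> S\<bar> \<ge> \<epsilon>}.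
        \<Prod>k\<in>{1..M}. sic_prob n \<psi> \<phi> S (Q k)) \<le> \<delta>)"
  unfolding Let_def by (rule main_bound[OF assms refl refl refl])

end
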